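(* Let $S^0$ be an adequate semigroup with semilattice of idempotents $E^0$. Let $L$ be a left adequate semigroup and $R$ a right adequate semigroup and suppose that $S^0$ is a common quasi-ideal adequate transversal of $L$ and $R$. For $x\in L$ write $x=e_x\overline{x}f_x$ and for $a\in R$ write $a=e_a\overline{a}f_a$ for the factorisations given by the transversal $S^0$ (so $\overline{x},\overline{a}\in S^0$, $e_x\in E(L)$, $f_x\in E^0$, $e_a\in E^0$, $f_a\in E(R)$). Let $R\times L\to S^0$ be a map denoted by $(a,x)\mapsto a\ast x$ and suppose that $\ast$ satisfies (1) for all $y,z\in L$, $a,b\in R$ with $\overline{y}=\overline{b}$, $(a\ast y)f_b\ast z = a\ast e_y(b\ast z)$; (2) if $a\in S^0$ or $x\in S^0$ then $a\ast x = ax$. Let $T = \{(x,a)\in L\times R : \overline{x} = \overline{a}\}$ and define $(x,a)(y,b)=(e_x(a\ast y),(a\ast y)f_b)$. Then $T$ is an abundant semigroup with a quasi-ideal adequate transversal $T^0=\{(s,s):s\in S^0\}$ with $T^0\cong S^0$. Moreover every abundant semigroup with a quasi-ideal adequate transversal can be constructed (up to isomorphism) in this way.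
   Context: A semigroup is abundant if every ${\cal R}^\ast$-class and every ${\cal L}^\ast$-class contains an idempotent; it is adequate if moreover its idempotents commute; it is left (resp. right) adequate if it is abundant and every ${\cal R}^\ast$-class (resp. ${\cal L}^\ast$-class) contains a unique idempotent. For $a$ in an adequate semigroup, $a^+$ and $a^\ast$ denote the unique idempotents in the ${\cal R}^\ast$- and ${\cal L}^\ast$-classes of $a$. An adequate $\ast$-subsemigroup $S^0$ of an abundant semigroup $S$ is an adequate transversal if each $x\in S$ has a unique $\overline{x}\in S^0$ and idempotents $e_x,f_x\in E(S)$ with $x=e_x\overline{x}f_x$, $e_x\,{\cal L}\,\overline{x}^+$, $f_x\,{\cal R}\,\overline{x}^\ast$ ($e_x,f_x$ are then uniquely determined). $S^0$ is a quasi-ideal if $S^0SS^0\subseteq S^0$. *)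

theory Defs
  imports Main
begin

definition semigroup_on :: "'a set \<Rightarrow> ('a \<Rightarrow> 'a \<Rightarrow> 'a) \<Rightarrow> bool" where
  "semigroup_on S m \<longleftrightarrow> (\<forall>a\<in>S. \<forall>b\<in>S. m a b \<in> S) \<and>
     (\<forall>a\<in>S. \<forall>b\<in>S. \<forall>c\<in>S. m (m a b) c = m a (m b c))"

definition idems :: "'a set \<Rightarrow> ('a \<Rightarrow> 'a \<Rightarrow> 'a) \<Rightarrow> 'a set" where
  "idems S m = {e\<in>S. m e e = e}"

text \<open>The relation R*: a R* b iff for all x, y in S^1, xa = ya iff xb = yb.
  (The clauses with x or y the adjoined identity are spelled out.)\<close>
definition Rstar :: "'a set \<Rightarrow> ('a \<Rightarrow> 'a \<Rightarrow> 'a) \<Rightarrow> 'a \<Rightarrow> 'a \<Rightarrow> bool" where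
  "Rstar S m a b \<longleftrightarrow> a \<in> S \<and> b \<in> S \<and>
     (\<forall>x\<in>S. \<forall>y\<in>S. m x a = m y a \<longleftrightarrow> m x b = m y b) \<and>
     (\<forall>x\<in>S. m x a = a \<longleftrightarrow> m x b = b)"

definition Lstar :: "'a set \<Rightarrow> ('a \<Rightarrow> 'a \<Rightarrow> 'a) \<Rightarrow> 'a \<Rightarrow> 'a \<Rightarrow> bool" where
  "Lstar S m a b \<longleftrightarrow> a \<in> S \<and> b \<in> S \<and>
     (\<forall>x\<in>S. \<forall>y\<in>S. m a x = m a y \<longleftrightarrow> m b x = m b y) \<and>
     (\<forall>x\<in>S. m a x = a \<longleftrightarrow> m b x = b)"

definition GreenL :: "'a set \<Rightarrow> ('a \<Rightarrow> 'a \<Rightarrow> 'a) \<Rightarrow> 'a \<Rightarrow> 'a \<Rightarrow> bool" where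
  "GreenL S m a b \<longleftrightarrow> a \<in> S \<and> b \<in> S \<and>
     (a = b \<or> (\<exists>x\<in>S. a = m x b)) \<and> (b = a \<or> (\<exists>y\<in>S. b = m y a))"

definition GreenR :: "'a set \<Rightarrow> ('a \<Rightarrow> 'a \<Rightarrow> 'a) \<Rightarrow> 'a \<Rightarrow> 'a \<Rightarrow> bool" where
  "GreenR S m a b \<longleftrightarrow> a \<in> S \<and> b \<in> S \<and>
     (a = b \<or> (\<exists>x\<in>S. a = m b x)) \<and> (b = a \<or> (\<exists>y\<in>S. b = m a y))"

definition abundant :: "'a set \<Rightarrow> ('a \<Rightarrow> 'a \<Rightarrow> 'a) \<Rightarrow> bool" where
  "abundant S m \<longleftrightarrow> semigroup_on S m \<and>
     (\<forall>a\<in>S. \<exists>e\<in>idems S m. Rstar S m a e) \<and>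
     (\<forall>a\<in>S. \<exists>f\<in>idems S m. Lstar S m a f)"

definition adequate :: "'a set \<Rightarrow> ('a \<Rightarrow> 'a \<Rightarrow> 'a) \<Rightarrow> bool" where
  "adequate S m \<longleftrightarrow> abundant S m \<and>
     (\<forall>e\<in>idems S m. \<forall>f\<in>idems S m. m e f = m f e)"

definition left_adequate :: "'a set \<Rightarrow> ('a \<Rightarrow> 'a \<Rightarrow> 'a) \<Rightarrow> bool" where
  "left_adequate S m \<longleftrightarrow> abundant S m \<and>
     (\<forall>a\<in>S. \<exists>!e. e \<in> idems S m \<and> Rstar S m a e)"

definition right_adequate :: "'a set \<Rightarrow> ('a \<Rightarrow> 'a \<Rightarrow> 'a) \<Rightarrow> bool" where
  "right_adequate S m \<longleftrightarrow> abundant S m \<and>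
     (\<forall>a\<in>S. \<exists>!f. f \<in> idems S m \<and> Lstar S m a f)"

definition aplus :: "'a set \<Rightarrow> ('a \<Rightarrow> 'a \<Rightarrow> 'a) \<Rightarrow> 'a \<Rightarrow> 'a" where
  "aplus S m a = (THE e. e \<in> idems S m \<and> Rstar S m a e)"

definition astar :: "'a set \<Rightarrow> ('a \<Rightarrow> 'a \<Rightarrow> 'a) \<Rightarrow> 'a \<Rightarrow> 'a" where
  "astar S m a = (THE f. f \<in> idems S m \<and> Lstar S m a f)"

definition adequate_star_subsemigroup ::
  "'a set \<Rightarrow> ('a \<Rightarrow> 'a \<Rightarrow> 'a) \<Rightarrow> 'a set \<Rightarrow> bool" where
  "adequate_star_subsemigroup S m U \<longleftrightarrow> U \<subseteq> S \<and> adequate U m \<and>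
     (\<forall>a\<in>U. \<exists>e\<in>idems U m. Rstar S m a e) \<and>
     (\<forall>a\<in>U. \<exists>f\<in>idems U m. Lstar S m a f)"

definition transversal_factorisation ::
  "'a set \<Rightarrow> ('a \<Rightarrow> 'a \<Rightarrow> 'a) \<Rightarrow> 'a set \<Rightarrow> 'a \<Rightarrow> 'a \<Rightarrow> 'a \<Rightarrow> 'a \<Rightarrow> bool" where
  "transversal_factorisation S m S0 x xb e f \<longleftrightarrow>
     xb \<in> S0 \<and> e \<in> idems S m \<and> f \<in> idems S m \<and> x = m (m e xb) f \<and>
     GreenL S m e (aplus S0 m xb) \<and> GreenR S m f (astar S0 m xb)"

definition adequate_transversal :: "'a set \<Rightarrow> ('a \<Rightarrow> 'a \<Rightarrow> 'a) \<Rightarrow> 'a set \<Rightarrow> bool" where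
  "adequate_transversal S m S0 \<longleftrightarrow> abundant S m \<and> adequate_star_subsemigroup S m S0 \<and>
     (\<forall>x\<in>S. \<exists>!xb. \<exists>e f. transversal_factorisation S m S0 x xb e f)"

definition quasi_ideal :: "'a set \<Rightarrow> ('a \<Rightarrow> 'a \<Rightarrow> 'a) \<Rightarrow> 'a set \<Rightarrow> bool" where
  "quasi_ideal S m S0 \<longleftrightarrow> (\<forall>s\<in>S0. \<forall>x\<in>S. \<forall>t\<in>S0. m (m s x) t \<in> S0)"

definition qi_adequate_transversal :: "'a set \<Rightarrow> ('a \<Rightarrow> 'a \<Rightarrow> 'a) \<Rightarrow> 'a set \<Rightarrow> bool" where
  "qi_adequate_transversal S m S0 \<longleftrightarrow> adequate_transversal S m S0 \<and> quasi_ideal S m S0"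

definition tbar :: "'a set \<Rightarrow> ('a \<Rightarrow> 'a \<Rightarrow> 'a) \<Rightarrow> 'a set \<Rightarrow> 'a \<Rightarrow> 'a" where
  "tbar S m S0 x = (THE xb. \<exists>e f. transversal_factorisation S m S0 x xb e f)"

definition te :: "'a set \<Rightarrow> ('a \<Rightarrow> 'a \<Rightarrow> 'a) \<Rightarrow> 'a set \<Rightarrow> 'a \<Rightarrow> 'a" where
  "te S m S0 x = (THE e. \<exists>f. transversal_factorisation S m S0 x (tbar S m S0 x) e f)"

definition tf :: "'a set \<Rightarrow> ('a \<Rightarrow> 'a \<Rightarrow> 'a) \<Rightarrow> 'a set \<Rightarrow> 'a \<Rightarrow> 'a" where
  "tf S m S0 x = (THE f. \<exists>e. transversal_factorisation S m S0 x (tbar S m S0 x) e f)"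

definition sg_iso :: "'a set \<Rightarrow> ('a \<Rightarrow> 'a \<Rightarrow> 'a) \<Rightarrow> 'b set \<Rightarrow> ('b \<Rightarrow> 'b \<Rightarrow> 'b) \<Rightarrow> ('a \<Rightarrow> 'b) \<Rightarrow> bool" where
  "sg_iso S m S' m' \<phi> \<longleftrightarrow> bij_betw \<phi> S S' \<and> (\<forall>a\<in>S. \<forall>b\<in>S. \<phi> (m a b) = m' (\<phi> a) (\<phi> b))"

text \<open>The data of the construction: L left adequate, R right adequate, S0 a common
  quasi-ideal adequate transversal (a common subsemigroup: the two operations agree on S0),
  and a map st : R x L -> S0 satisfying conditions (1) and (2).\<close>
definition construction_data ::
  "'a set \<Rightarrow> ('a \<Rightarrow> 'a \<Rightarrow> 'a) \<Rightarrow> 'a set \<Rightarrow> ('a \<Rightarrow> 'a \<Rightarrow> 'a) \<Rightarrow> 'a set \<Rightarrow> ('a \<Rightarrow> 'a \<Rightarrow> 'a) \<Rightarrow> bool" where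
  "construction_data L mL R mR S0 st \<longleftrightarrow>
     adequate S0 mL \<and>
     left_adequate L mL \<and> right_adequate R mR \<and>
     (\<forall>s\<in>S0. \<forall>t\<in>S0. mL s t = mR s t) \<and>
     qi_adequate_transversal L mL S0 \<and> qi_adequate_transversal R mR S0 \<and>
     (\<forall>a\<in>R. \<forall>x\<in>L. st a x \<in> S0) \<and>
     (\<forall>y\<in>L. \<forall>z\<in>L. \<forall>a\<in>R. \<forall>b\<in>R. tbar L mL S0 y = tbar R mR S0 b \<longrightarrow>
        st (mR (st a y) (tf R mR S0 b)) z = st a (mL (te L mL S0 y) (st b z))) \<and>
     (\<forall>a\<in>R. \<forall>x\<in>L. (a \<in> S0 \<longrightarrow> st a x = mL a x) \<and> (x \<in> S0 \<longrightarrow> st a x = mR a x))"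

definition T_set :: "'a set \<Rightarrow> ('a \<Rightarrow> 'a \<Rightarrow> 'a) \<Rightarrow> 'a set \<Rightarrow> ('a \<Rightarrow> 'a \<Rightarrow> 'a) \<Rightarrow> 'a set \<Rightarrow> ('a \<times> 'a) set" where
  "T_set L mL R mR S0 = {(x, a). x \<in> L \<and> a \<in> R \<and> tbar L mL S0 x = tbar R mR S0 a}"

definition T_mult ::
  "'a set \<Rightarrow> ('a \<Rightarrow> 'a \<Rightarrow> 'a) \<Rightarrow> 'a set \<Rightarrow> ('a \<Rightarrow> 'a \<Rightarrow> 'a) \<Rightarrow> 'a set \<Rightarrow> ('a \<Rightarrow> 'a \<Rightarrow> 'a)
     \<Rightarrow> ('a \<times> 'a) \<Rightarrow> ('a \<times> 'a) \<Rightarrow> ('a \<times> 'a)" where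
  "T_mult L mL R mR S0 st p q =
     (case p of (x, a) \<Rightarrow> case q of (y, b) \<Rightarrow>
        (mL (te L mL S0 x) (st a y), mR (st a y) (tf R mR S0 b)))"

definition T0_set :: "'a set \<Rightarrow> ('a \<times> 'a) set" where
  "T0_set S0 = {(s, s) | s. s \<in> S0}"

end

theory Submission
  imports Defs
begin

lemma sgD1: "semigroup_on S m \<Longrightarrow> a \<in> S \<Longrightarrow> b \<in> S \<Longrightarrow> m a b \<in> S"
  unfolding semigroup_on_def by blast
lemma sgD2: "semigroup_on S m \<Longrightarrow> a \<in> S \<Longrightarrow> b \<in> S \<Longrightarrow> c \<in> S \<Longrightarrow> m (m a b) c = m a (m b c)"
  unfolding semigroup_on_def by blast

lemma Rstar_in: "Rstar S m a b \<Longrightarrow> a \<in> S \<and> b \<in> S" unfolding Rstar_def by blast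
lemma Rstar_sym: "Rstar S m a b \<Longrightarrow> Rstar S m b a" unfolding Rstar_def by blast
lemma Rstar_trans: "Rstar S m a b \<Longrightarrow> Rstar S m b c \<Longrightarrow> Rstar S m a c" unfolding Rstar_def by blast
lemma Rstar_refl: "a \<in> S \<Longrightarrow> Rstar S m a a" unfolding Rstar_def by blast
lemma Rstar_restrict: "Rstar S m a b \<Longrightarrow> U \<subseteq> S \<Longrightarrow> a \<in> U \<Longrightarrow> b \<in> U \<Longrightarrow> Rstar U m a b"
  unfolding Rstar_def by blast
lemma Rstar_canc: "Rstar S m a b \<Longrightarrow> x \<in> S \<Longrightarrow> y \<in> S \<Longrightarrow> m x a = m y a \<Longrightarrow> m x b = m y b"
  unfolding Rstar_def by blast
lemma Rstar_canc1: "Rstar S m a b \<Longrightarrow> x \<in> S \<Longrightarrow> m x a = a \<Longrightarrow> m x b = b"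
  unfolding Rstar_def by blast
lemma Rstar_idem: "Rstar S m a e \<Longrightarrow> e \<in> idems S m \<Longrightarrow> m e a = a"
  unfolding Rstar_def idems_def by blast
lemma Rstar_idems: "Rstar S m e f \<Longrightarrow> e \<in> idems S m \<Longrightarrow> f \<in> idems S m \<Longrightarrow> m e f = f \<and> m f e = e"
  using Rstar_idem Rstar_sym by metis
lemma Rstar_iff1: "Rstar S m a b \<Longrightarrow> x \<in> S \<Longrightarrow> y \<in> S \<Longrightarrow> (m x a = m y a) = (m x b = m y b)"
  by (rule iffI) (erule Rstar_canc, assumption+, erule Rstar_canc[OF Rstar_sym], assumption+)
lemma Rstar_iff2: "Rstar S m a b \<Longrightarrow> x \<in> S \<Longrightarrow> (m x a = a) = (m x b = b)"
  by (rule iffI) (erule Rstar_canc1, assumption+, erule Rstar_canc1[OF Rstar_sym], assumption+)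
lemma RstarI: "a \<in> S \<Longrightarrow> b \<in> S \<Longrightarrow> (\<And>x y. x \<in> S \<Longrightarrow> y \<in> S \<Longrightarrow> (m x a = m y a) = (m x b = m y b))
  \<Longrightarrow> (\<And>x. x \<in> S \<Longrightarrow> (m x a = a) = (m x b = b)) \<Longrightarrow> Rstar S m a b"
  unfolding Rstar_def by (intro conjI ballI) assumption+

lemma Rstar_lcong: assumes sg: "semigroup_on S m" and r: "Rstar S m a b" and c: "c \<in> S"
  shows "Rstar S m (m c a) (m c b)"
proof (rule RstarI)
  have ab: "a \<in> S" "b \<in> S" using Rstar_in[OF r] by simp_all
  then show "m c a \<in> S" "m c b \<in> S" using sgD1[OF sg] c by auto
  fix x y assume xy: "x \<in> S" "y \<in> S"
  have "m x (m c a) = m y (m c a) \<longleftrightarrow> m (m x c) a = m (m y c) a" by (simp add: sgD2[OF sg] xy c ab)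
  also have "\<dots> \<longleftrightarrow> m (m x c) b = m (m y c) b" using Rstar_iff1[OF r] sgD1[OF sg] xy c by simp
  also have "\<dots> \<longleftrightarrow> m x (m c b) = m y (m c b)" by (simp add: sgD2[OF sg] xy c ab)
  finally show "m x (m c a) = m y (m c a) \<longleftrightarrow> m x (m c b) = m y (m c b)" .
next
  have ab: "a \<in> S" "b \<in> S" using Rstar_in[OF r] by simp_all
  fix x assume x: "x \<in> S"
  have "m x (m c a) = m c a \<longleftrightarrow> m (m x c) a = m c a" by (simp add: sgD2[OF sg] x c ab)
  also have "\<dots> \<longleftrightarrow> m (m x c) b = m c b" using Rstar_iff1[OF r] sgD1[OF sg] x c by simp
  also have "\<dots> \<longleftrightarrow> m x (m c b) = m c b" by (simp add: sgD2[OF sg] x c ab)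
  finally show "m x (m c a) = m c a \<longleftrightarrow> m x (m c b) = m c b" .
qed

lemma R_Rstar: assumes sg: "semigroup_on S m" and S: "a \<in> S" "u \<in> S" "v \<in> S" and b: "b = m a u" "a = m b v"
  shows "Rstar S m a b"
proof -
  have bS: "b \<in> S" unfolding b(1) using S sgD1[OF sg] by simp
  have A: "m x a = m y a \<longleftrightarrow> m x b = m y b" if xy: "x \<in> S" "y \<in> S" for x y
  proof
    assume "m x a = m y a"
    then have "m (m x a) u = m (m y a) u" by simp
    then show "m x b = m y b" using b(1) by (simp add: sgD2[OF sg] xy S)
  next
    assume "m x b = m y b"
    then have "m (m x b) v = m (m y b) v" by simp
    then show "m x a = m y a" using b(2) bS by (simp add: sgD2[OF sg] xy S)
  qed
  have B: "m x a = a \<longleftrightarrow> m x b = b" if x: "x \<in> S" for x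
  proof
    assume "m x a = a"
    then have "m (m x a) u = m a u" by simp
    then show "m x b = b" using b(1) by (simp add: sgD2[OF sg] x S)
  next
    assume "m x b = b"
    then have "m (m x b) v = m b v" by simp
    then show "m x a = a" using b(2) bS by (simp add: sgD2[OF sg] x S)
  qed
  show ?thesis by (rule RstarI) (simp_all add: A B S bS)
qed

lemma Rstar_cong1: assumes h: "\<forall>a\<in>S. \<forall>b\<in>S. m a b = m' a b" and r: "Rstar S m a b"
  shows "Rstar S m' a b"
proof (rule RstarI)
  show ab: "a \<in> S" "b \<in> S" using Rstar_in[OF r] by simp_all
  fix x y assume xy: "x \<in> S" "y \<in> S"
  have "(m' x a = m' y a) = (m x a = m y a)" using h ab xy by simp
  also have "\<dots> = (m x b = m y b)" using Rstar_iff1[OF r xy] .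
  also have "\<dots> = (m' x b = m' y b)" using h ab xy by simp
  finally show "(m' x a = m' y a) = (m' x b = m' y b)" .
next
  have ab: "a \<in> S" "b \<in> S" using Rstar_in[OF r] by simp_all
  fix x assume xy: "x \<in> S"
  have "(m' x a = a) = (m x a = a)" using h ab xy by simp
  also have "\<dots> = (m x b = b)" using Rstar_iff2[OF r xy] .
  also have "\<dots> = (m' x b = b)" using h ab xy by simp
  finally show "(m' x a = a) = (m' x b = b)" .
qed
lemma cong_sym: assumes h: "\<forall>a\<in>S. \<forall>b\<in>S. m a b = m' a b" shows "\<forall>a\<in>S. \<forall>b\<in>S. m' a b = m a b"
proof (intro ballI)
  fix a b assume ab: "a \<in> S" "b \<in> S"
  show "m' a b = m a b" using h[rule_format, OF ab] by (rule sym)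
qed
lemma Rstar_cong: assumes h: "\<forall>a\<in>S. \<forall>b\<in>S. m a b = m' a b" shows "Rstar S m = Rstar S m'"
proof -
  have h': "\<forall>a\<in>S. \<forall>b\<in>S. m' a b = m a b"
  proof (intro ballI)
    fix a b assume ab: "a \<in> S" "b \<in> S"
    show "m' a b = m a b" using h[rule_format, OF ab] by (rule sym)
  qed
  show ?thesis by (intro ext iffI) (erule Rstar_cong1[OF h], erule Rstar_cong1[OF h'])
qed
lemma Rstar_op: "Rstar S (\<lambda>a b. m b a) = Lstar S m"
  unfolding Rstar_def Lstar_def by (rule refl)
lemma Lstar_op: "Lstar S (\<lambda>a b. m b a) = Rstar S m"
  unfolding Rstar_def Lstar_def by (rule refl)
lemma Lstar_cong: assumes h: "\<forall>a\<in>S. \<forall>b\<in>S. m a b = m' a b" shows "Lstar S m = Lstar S m'"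
proof -
  have "\<forall>a\<in>S. \<forall>b\<in>S. (\<lambda>a b. m b a) a b = (\<lambda>a b. m' b a) a b"
    using h by (intro ballI) (simp only: h[rule_format])
  then have "Rstar S (\<lambda>a b. m b a) = Rstar S (\<lambda>a b. m' b a)" by (rule Rstar_cong)
  then show ?thesis by (simp only: Rstar_op[of S m] Rstar_op[of S m'])
qed
lemma idems_cong: assumes h: "\<forall>a\<in>S. \<forall>b\<in>S. m a b = m' a b" shows "idems S m = idems S m'"
  unfolding idems_def
proof (rule Collect_cong)
  fix e show "(e \<in> S \<and> m e e = e) = (e \<in> S \<and> m' e e = e)"
    by (cases "e \<in> S") (simp_all only: h[rule_format] simp_thms)
qed
lemma aplus_cong: assumes h: "\<forall>a\<in>S. \<forall>b\<in>S. m a b = m' a b" shows "aplus S m = aplus S m'"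
  unfolding aplus_def using Rstar_cong[OF h] idems_cong[OF h] by simp
lemma astar_cong: assumes h: "\<forall>a\<in>S. \<forall>b\<in>S. m a b = m' a b" shows "astar S m = astar S m'"
  unfolding astar_def using Lstar_cong[OF h] idems_cong[OF h] by simp
lemma semigroup_on_cong1: assumes h: "\<forall>a\<in>S. \<forall>b\<in>S. m a b = m' a b" and sg: "semigroup_on S m"
  shows "semigroup_on S m'"
proof -
  have c: "\<And>a b. a \<in> S \<Longrightarrow> b \<in> S \<Longrightarrow> m a b \<in> S" using sg sgD1 by metis
  have c': "\<And>a b. a \<in> S \<Longrightarrow> b \<in> S \<Longrightarrow> m' a b \<in> S" using c h by metis
  have "\<And>a b c. a \<in> S \<Longrightarrow> b \<in> S \<Longrightarrow> c \<in> S \<Longrightarrow> m' (m' a b) c = m' a (m' b c)"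
  proof -
    fix a b d assume S: "a \<in> S" "b \<in> S" "d \<in> S"
    have "m' (m' a b) d = m (m a b) d" using h S c by simp
    also have "\<dots> = m a (m b d)" using sgD2[OF sg] S by blast
    also have "\<dots> = m' a (m' b d)" using h S c by simp
    finally show "m' (m' a b) d = m' a (m' b d)" .
  qed
  then show ?thesis unfolding semigroup_on_def using c' by blast
qed
lemma semigroup_on_cong: assumes h: "\<forall>a\<in>S. \<forall>b\<in>S. m a b = m' a b" shows "semigroup_on S m = semigroup_on S m'"
proof -
  have h': "\<forall>a\<in>S. \<forall>b\<in>S. m' a b = m a b" using cong_sym[OF h] .
  show ?thesis using semigroup_on_cong1[OF h] semigroup_on_cong1[OF h'] by blast
qed
lemma abundant_cong: assumes h: "\<forall>a\<in>S. \<forall>b\<in>S. m a b = m' a b" shows "abundant S m = abundant S m'"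
  unfolding abundant_def using semigroup_on_cong[OF h] Rstar_cong[OF h] Lstar_cong[OF h] idems_cong[OF h] by simp
lemma adequate_cong: assumes h: "\<forall>a\<in>S. \<forall>b\<in>S. m a b = m' a b" shows "adequate S m = adequate S m'"
proof -
  have i: "idems S m = idems S m'" using idems_cong[OF h] .
  have "\<And>e f. e \<in> idems S m \<Longrightarrow> f \<in> idems S m \<Longrightarrow> (m e f = m f e) = (m' e f = m' f e)"
    using h unfolding idems_def by simp
  then show ?thesis unfolding adequate_def using abundant_cong[OF h] i by blast
qed

lemma GreenL_idem: assumes sg: "semigroup_on S m" and e: "e \<in> idems S m" and p: "p \<in> idems S m"
  and g: "GreenL S m e p" shows "m e p = e \<and> m p e = p"
proof
  have eS: "e \<in> S" "m e e = e" and pS: "p \<in> S" "m p p = p" using e p unfolding idems_def by auto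
  have g1: "e = p \<or> (\<exists>x\<in>S. e = m x p)" and g2: "p = e \<or> (\<exists>y\<in>S. p = m y e)"
    using g unfolding GreenL_def by auto
  show "m e p = e"
  proof (cases "e = p")
    case True then show ?thesis using pS by simp
  next
    case False
    then obtain x where x: "x \<in> S" "e = m x p" using g1 by blast
    have "m e p = m x (m p p)" unfolding x(2) using sgD2[OF sg x(1) pS(1) pS(1)] .
    then show ?thesis using pS x by simp
  qed
  show "m p e = p"
  proof (cases "p = e")
    case True then show ?thesis using eS by simp
  next
    case False
    then obtain y where y: "y \<in> S" "p = m y e" using g2 by blast
    have "m p e = m y (m e e)" unfolding y(2) using sgD2[OF sg y(1) eS(1) eS(1)] .
    then show ?thesis using eS y by simp
  qed
qed
lemma GreenR_idem: assumes sg: "semigroup_on S m" and e: "e \<in> idems S m" and p: "p \<in> idems S m"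
  and g: "GreenR S m e p" shows "m p e = e \<and> m e p = p"
proof
  have eS: "e \<in> S" "m e e = e" and pS: "p \<in> S" "m p p = p" using e p unfolding idems_def by auto
  have g1: "e = p \<or> (\<exists>x\<in>S. e = m p x)" and g2: "p = e \<or> (\<exists>y\<in>S. p = m e y)"
    using g unfolding GreenR_def by auto
  show "m p e = e"
  proof (cases "e = p")
    case True then show ?thesis using pS by simp
  next
    case False
    then obtain x where x: "x \<in> S" "e = m p x" using g1 by blast
    have "m p e = m (m p p) x" unfolding x(2) using sgD2[OF sg pS(1) pS(1) x(1)] by simp
    then show ?thesis using pS x by simp
  qed
  show "m e p = p"
  proof (cases "p = e")
    case True then show ?thesis using eS by simp
  next
    case False
    then obtain y where y: "y \<in> S" "p = m e y" using g2 by blast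
    have "m e p = m (m e e) y" unfolding y(2) using sgD2[OF sg eS(1) eS(1) y(1)] by simp
    then show ?thesis using eS y by simp
  qed
qed

lemma GreenL_op: "GreenL S (\<lambda>a b. m b a) = GreenR S m"
  unfolding GreenL_def GreenR_def by (rule refl)
lemma GreenR_op: "GreenR S (\<lambda>a b. m b a) = GreenL S m"
  unfolding GreenL_def GreenR_def by (rule refl)
lemma idems_op: "idems S (\<lambda>a b. m b a) = idems S m"
  unfolding idems_def by (rule refl)
lemma semigroup_on_op1: "semigroup_on S m \<Longrightarrow> semigroup_on S (\<lambda>a b. m b a)"
proof -
  assume sg: "semigroup_on S m"
  have "\<And>a b c. a \<in> S \<Longrightarrow> b \<in> S \<Longrightarrow> c \<in> S \<Longrightarrow> m c (m b a) = m (m c b) a"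
    using sgD2[OF sg] by simp
  then show ?thesis using sgD1[OF sg] unfolding semigroup_on_def by blast
qed
lemma semigroup_on_op: "semigroup_on S (\<lambda>a b. m b a) = semigroup_on S m"
  using semigroup_on_op1[of S m] semigroup_on_op1[of S "\<lambda>a b. m b a"] by blast
lemma abundant_op: "abundant S (\<lambda>a b. m b a) = abundant S m"
  unfolding abundant_def by (simp only: semigroup_on_op[of S m] Rstar_op[of S m] Lstar_op[of S m] idems_op[of S m]) blast
lemma adequate_op: "adequate S (\<lambda>a b. m b a) = adequate S m"
  unfolding adequate_def by (simp only: abundant_op[of S m] idems_op[of S m]) blast
lemma left_adequate_op: "left_adequate S (\<lambda>a b. m b a) = right_adequate S m"
  unfolding left_adequate_def right_adequate_def by (simp only: abundant_op[of S m] Rstar_op[of S m] Lstar_op[of S m] idems_op[of S m])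
lemma right_adequate_op: "right_adequate S (\<lambda>a b. m b a) = left_adequate S m"
  unfolding left_adequate_def right_adequate_def by (simp only: abundant_op[of S m] Rstar_op[of S m] Lstar_op[of S m] idems_op[of S m])
lemma aplus_op: "aplus S (\<lambda>a b. m b a) = astar S m"
  unfolding aplus_def astar_def by (simp only: Rstar_op[of S m] idems_op[of S m])
lemma astar_op: "astar S (\<lambda>a b. m b a) = aplus S m"
  unfolding aplus_def astar_def by (simp only: Lstar_op[of S m] idems_op[of S m])
lemma ass_op: "adequate_star_subsemigroup S (\<lambda>a b. m b a) U = adequate_star_subsemigroup S m U"
  unfolding adequate_star_subsemigroup_def by (simp only: adequate_op[of U m] Rstar_op[of S m] Lstar_op[of S m] idems_op[of U m]) blast


lemma Lstar_in: "Lstar S m a b \<Longrightarrow> a \<in> S \<and> b \<in> S" unfolding Lstar_def by blast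
lemma Lstar_sym: "Lstar S m a b \<Longrightarrow> Lstar S m b a" unfolding Lstar_def by blast
lemma Lstar_trans: "Lstar S m a b \<Longrightarrow> Lstar S m b c \<Longrightarrow> Lstar S m a c" unfolding Lstar_def by blast
lemma Lstar_refl: "a \<in> S \<Longrightarrow> Lstar S m a a" unfolding Lstar_def by blast
lemma Lstar_restrict: "Lstar S m a b \<Longrightarrow> U \<subseteq> S \<Longrightarrow> a \<in> U \<Longrightarrow> b \<in> U \<Longrightarrow> Lstar U m a b"
  unfolding Lstar_def by blast
lemma Lstar_canc: "Lstar S m a b \<Longrightarrow> x \<in> S \<Longrightarrow> y \<in> S \<Longrightarrow> m a x = m a y \<Longrightarrow> m b x = m b y"
  unfolding Lstar_def by blast
lemma Lstar_canc1: "Lstar S m a b \<Longrightarrow> x \<in> S \<Longrightarrow> m a x = a \<Longrightarrow> m b x = b"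
  unfolding Lstar_def by blast
lemma Lstar_idem: "Lstar S m a e \<Longrightarrow> e \<in> idems S m \<Longrightarrow> m a e = a"
  unfolding Lstar_def idems_def by blast
lemma Lstar_idems: "Lstar S m e f \<Longrightarrow> e \<in> idems S m \<Longrightarrow> f \<in> idems S m \<Longrightarrow> m f e = f \<and> m e f = e"
proof -
  assume a: "Lstar S m e f" "e \<in> idems S m" "f \<in> idems S m"
  have "m e f = e" using Lstar_idem[OF a(1) a(3)] .
  moreover have "m f e = f" using Lstar_idem[OF Lstar_sym[OF a(1)] a(2)] .
  ultimately show ?thesis by simp
qed

lemma GreenL_refl: "a \<in> S \<Longrightarrow> GreenL S m a a" unfolding GreenL_def by blast
lemma GreenR_refl: "a \<in> S \<Longrightarrow> GreenR S m a a" unfolding GreenR_def by blast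
lemma GreenL_mono: "GreenL U m a b \<Longrightarrow> U \<subseteq> S \<Longrightarrow> GreenL S m a b" unfolding GreenL_def by blast
lemma GreenR_mono: "GreenR U m a b \<Longrightarrow> U \<subseteq> S \<Longrightarrow> GreenR S m a b" unfolding GreenR_def by blast
lemma idems_mono: "U \<subseteq> S \<Longrightarrow> idems U m \<subseteq> idems S m" unfolding idems_def by blast

lemma aplus_eq: assumes c: "\<forall>e\<in>idems U m. \<forall>f\<in>idems U m. m e f = m f e"
  and e: "e \<in> idems U m" and r: "Rstar U m s e" shows "aplus U m s = e"
  unfolding aplus_def
proof (rule the_equality)
  show "e \<in> idems U m \<and> Rstar U m s e" using e r by simp
  fix e' assume e': "e' \<in> idems U m \<and> Rstar U m s e'"
  have "Rstar U m e e'" using Rstar_trans[OF Rstar_sym[OF r]] e' by simp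
  then have "m e e' = e' \<and> m e' e = e" using Rstar_idems[OF _ e] e' by blast
  moreover have "m e e' = m e' e" using c e e' by simp
  ultimately show "e' = e" by metis
qed

lemma astar_eq: assumes c: "\<forall>e\<in>idems U m. \<forall>f\<in>idems U m. m e f = m f e"
  and e: "e \<in> idems U m" and r: "Lstar U m s e" shows "astar U m s = e"
  unfolding astar_def
proof (rule the_equality)
  show "e \<in> idems U m \<and> Lstar U m s e" using e r by simp
  fix e' assume e': "e' \<in> idems U m \<and> Lstar U m s e'"
  have "Lstar U m e e'" using Lstar_trans[OF Lstar_sym[OF r]] e' by simp
  then have "m e' e = e' \<and> m e e' = e" using Lstar_idems[OF _ e] e' by blast
  moreover have "m e e' = m e' e" using c e e' by simp
  ultimately show "e' = e" by metis
qed

locale AT =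
  fixes S :: "'a set" and m :: "'a \<Rightarrow> 'a \<Rightarrow> 'a" and S0 :: "'a set"
  assumes AT: "adequate_transversal S m S0"
begin

abbreviation "fac \<equiv> transversal_factorisation S m S0"
abbreviation "pl \<equiv> aplus S0 m"
abbreviation "sa \<equiv> astar S0 m"
abbreviation "bar \<equiv> tbar S m S0"
abbreviation "ee \<equiv> te S m S0"
abbreviation "ff \<equiv> tf S m S0"

lemma sg: "semigroup_on S m" using AT unfolding adequate_transversal_def abundant_def by blast
lemma cl: "a \<in> S \<Longrightarrow> b \<in> S \<Longrightarrow> m a b \<in> S" using sgD1[OF sg] .
lemma assoc: "a \<in> S \<Longrightarrow> b \<in> S \<Longrightarrow> c \<in> S \<Longrightarrow> m (m a b) c = m a (m b c)" using sgD2[OF sg] .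
lemma ass: "adequate_star_subsemigroup S m S0" using AT unfolding adequate_transversal_def by blast
lemma S0S: "S0 \<subseteq> S" using ass unfolding adequate_star_subsemigroup_def by blast
lemma S0S': "s \<in> S0 \<Longrightarrow> s \<in> S" using S0S by blast
lemma adS0: "adequate S0 m" using ass unfolding adequate_star_subsemigroup_def by blast
lemma cl0: "a \<in> S0 \<Longrightarrow> b \<in> S0 \<Longrightarrow> m a b \<in> S0"
  using adS0 unfolding adequate_def abundant_def semigroup_on_def by blast
lemma comm0': "\<forall>e\<in>idems S0 m. \<forall>f\<in>idems S0 m. m e f = m f e"
  using adS0 unfolding adequate_def by blast
lemma comm0: "e \<in> idems S0 m \<Longrightarrow> f \<in> idems S0 m \<Longrightarrow> m e f = m f e"
  using comm0' by blast
lemma idems0': "e \<in> idems S0 m \<Longrightarrow> e \<in> idems S m" using S0S unfolding idems_def by blast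
lemma idemsD: "e \<in> idems S m \<Longrightarrow> e \<in> S" unfolding idems_def by blast
lemma idemsD2: "e \<in> idems S m \<Longrightarrow> m e e = e" unfolding idems_def by blast
lemma idems0D: "e \<in> idems S0 m \<Longrightarrow> e \<in> S0" unfolding idems_def by blast
lemma idems0D2: "e \<in> idems S0 m \<Longrightarrow> m e e = e" unfolding idems_def by blast
lemma idemsI: "e \<in> S \<Longrightarrow> m e e = e \<Longrightarrow> e \<in> idems S m" unfolding idems_def by blast
lemma idems0I: "e \<in> S0 \<Longrightarrow> m e e = e \<Longrightarrow> e \<in> idems S0 m" unfolding idems_def by blast

lemma plus: assumes "s \<in> S0" shows "pl s \<in> idems S0 m \<and> Rstar S m s (pl s)"
proof -
  obtain e where e: "e \<in> idems S0 m" "Rstar S m s e" using ass assms unfolding adequate_star_subsemigroup_def by blast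
  have "e \<in> S0" using idems0D[OF e(1)] .
  then have "Rstar S0 m s e" using Rstar_restrict[OF e(2) S0S assms] by simp
  then have "pl s = e" using aplus_eq[OF comm0' e(1)] by simp
  then show ?thesis using e by simp
qed

lemma plus_idem: "s \<in> S0 \<Longrightarrow> pl s \<in> idems S0 m" using plus by blast
lemma plus_R: "s \<in> S0 \<Longrightarrow> Rstar S m s (pl s)" using plus by blast
lemma plus_S0: "s \<in> S0 \<Longrightarrow> pl s \<in> S0" using idems0D[OF plus_idem] .
lemma plus_S: "s \<in> S0 \<Longrightarrow> pl s \<in> S" using S0S'[OF plus_S0] .
lemma plus_sq: "s \<in> S0 \<Longrightarrow> m (pl s) (pl s) = pl s" using idems0D2[OF plus_idem] .
lemma plus_l: "s \<in> S0 \<Longrightarrow> m (pl s) s = s" using Rstar_idem[OF plus_R idems0'[OF plus_idem]] .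
lemma plus_of_idem: "e \<in> idems S0 m \<Longrightarrow> pl e = e"
  using aplus_eq[OF comm0' _ Rstar_refl[OF idems0D]] by blast

lemma dual_fac_iff: "transversal_factorisation S (\<lambda>a b. m b a) S0 x xb f e \<longleftrightarrow> fac x xb e f"
proof -
  have A: "transversal_factorisation S (\<lambda>a b. m b a) S0 x xb f e \<longleftrightarrow>
     (xb \<in> S0 \<and> f \<in> idems S m \<and> e \<in> idems S m \<and> x = m e (m xb f) \<and>
      GreenR S m f (sa xb) \<and> GreenL S m e (pl xb))"
    unfolding transversal_factorisation_def
    by (simp only: idems_op[of S m] GreenL_op[of S m] GreenR_op[of S m] aplus_op[of S0 m] astar_op[of S0 m])
  have B: "m e (m xb f) = m (m e xb) f" if "xb \<in> S0" "e \<in> idems S m" "f \<in> idems S m"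
    using assoc[OF idemsD[OF that(2)] S0S'[OF that(1)] idemsD[OF that(3)]] by simp
  have C: "fac x xb e f \<longleftrightarrow> (xb \<in> S0 \<and> e \<in> idems S m \<and> f \<in> idems S m \<and> x = m (m e xb) f \<and>
      GreenL S m e (pl xb) \<and> GreenR S m f (sa xb))"
    unfolding transversal_factorisation_def by (rule refl)
  show ?thesis unfolding A C using B by auto
qed

lemma dual: "AT S (\<lambda>a b. m b a) S0"
proof
  have u: "\<forall>x\<in>S. \<exists>!xb. \<exists>e f. fac x xb e f" using AT unfolding adequate_transversal_def by blast
  have "\<exists>!xb. \<exists>e f. transversal_factorisation S (\<lambda>a b. m b a) S0 x xb e f" if x: "x \<in> S" for x
  proof -
    obtain xb where xb: "\<exists>e f. fac x xb e f" and un: "\<And>y. (\<exists>e f. fac x y e f) \<Longrightarrow> y = xb"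
      using u x by metis
    show ?thesis
    proof (rule ex1I[of _ xb])
      show "\<exists>e f. transversal_factorisation S (\<lambda>a b. m b a) S0 x xb e f" using xb dual_fac_iff by blast
      fix y assume "\<exists>e f. transversal_factorisation S (\<lambda>a b. m b a) S0 x y e f"
      then have "\<exists>e f. fac x y e f" using dual_fac_iff by blast
      then show "y = xb" using un by blast
    qed
  qed
  then show "adequate_transversal S (\<lambda>a b. m b a) S0"
    using AT unfolding adequate_transversal_def abundant_op[of S m] ass_op[of S m S0] by blast
qed

lemma tbar_op: "tbar S (\<lambda>a b. m b a) S0 = bar"
proof
  fix x
  have "(\<lambda>xb. \<exists>e f. transversal_factorisation S (\<lambda>a b. m b a) S0 x xb e f) = (\<lambda>xb. \<exists>e f. fac x xb e f)"
    using dual_fac_iff by blast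
  then show "tbar S (\<lambda>a b. m b a) S0 x = bar x" unfolding tbar_def by simp
qed

lemma te_op: "te S (\<lambda>a b. m b a) S0 = ff"
proof
  fix x
  have "(\<lambda>e. \<exists>f. transversal_factorisation S (\<lambda>a b. m b a) S0 x (bar x) e f) = (\<lambda>e. \<exists>f. fac x (bar x) f e)"
    using dual_fac_iff by blast
  then show "te S (\<lambda>a b. m b a) S0 x = ff x" unfolding te_def tf_def tbar_op by simp
qed

lemma tf_op: "tf S (\<lambda>a b. m b a) S0 = ee"
proof
  fix x
  have "(\<lambda>f. \<exists>e. transversal_factorisation S (\<lambda>a b. m b a) S0 x (bar x) e f) = (\<lambda>f. \<exists>e. fac x (bar x) f e)"
    using dual_fac_iff by blast
  then show "tf S (\<lambda>a b. m b a) S0 x = ee x" unfolding te_def tf_def tbar_op by simp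
qed

lemma star: assumes s: "s \<in> S0" shows "sa s \<in> idems S0 m \<and> Lstar S m s (sa s)"
proof -
  interpret D: AT S "\<lambda>a b. m b a" S0 by (rule dual)
  show ?thesis using D.plus[OF s] by (simp only: aplus_op[of S0 m] idems_op[of S0 m] Rstar_op[of S m])
qed

lemma star_idem: "s \<in> S0 \<Longrightarrow> sa s \<in> idems S0 m" using star by blast
lemma star_L: "s \<in> S0 \<Longrightarrow> Lstar S m s (sa s)" using star by blast
lemma star_S0: "s \<in> S0 \<Longrightarrow> sa s \<in> S0" using idems0D[OF star_idem] .
lemma star_S: "s \<in> S0 \<Longrightarrow> sa s \<in> S" using S0S'[OF star_S0] .
lemma star_sq: "s \<in> S0 \<Longrightarrow> m (sa s) (sa s) = sa s" using idems0D2[OF star_idem] .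
lemma star_r: "s \<in> S0 \<Longrightarrow> m s (sa s) = s" using Lstar_idem[OF star_L idems0'[OF star_idem]] .
lemma star_of_idem: "e \<in> idems S0 m \<Longrightarrow> sa e = e"
  using astar_eq[OF comm0' _ Lstar_refl[OF idems0D]] by blast

lemma fac_in: "fac x xb e f \<Longrightarrow> xb \<in> S0 \<and> e \<in> idems S m \<and> f \<in> idems S m \<and> x = m (m e xb) f"
  unfolding transversal_factorisation_def by blast
lemma fac_GL: "fac x xb e f \<Longrightarrow> m e (pl xb) = e \<and> m (pl xb) e = pl xb"
  unfolding transversal_factorisation_def using GreenL_idem[OF sg] idems0'[OF plus_idem] by blast
lemma fac_GR: "fac x xb e f \<Longrightarrow> m (sa xb) f = f \<and> m f (sa xb) = sa xb"
  unfolding transversal_factorisation_def using GreenR_idem[OF sg] idems0'[OF star_idem] by blast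
lemma fac_S: "fac x xb e f \<Longrightarrow> x \<in> S"
proof -
  assume a: "fac x xb e f"
  then have "xb \<in> S0" "e \<in> S" "f \<in> S" "x = m (m e xb) f" using fac_in idemsD by blast+
  then show "x \<in> S" using cl S0S' by metis
qed

lemma fac_R: assumes a: "fac x xb e f" shows "Rstar S m x e"
proof -
  have i: "xb \<in> S0" "e \<in> idems S m" "f \<in> idems S m" "x = m (m e xb) f" using fac_in[OF a] by auto
  have eS: "e \<in> S" "f \<in> S" "xb \<in> S" using idemsD i S0S' by auto
  have gl: "m e (pl xb) = e" using fac_GL[OF a] by blast
  have gr: "m f (sa xb) = sa xb" using fac_GR[OF a] by blast
  have r1: "Rstar S m (m e xb) (m e (pl xb))" using Rstar_lcong[OF sg plus_R[OF i(1)] eS(1)] .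
  have exS: "m e xb \<in> S" using cl eS by simp
  have "m x (sa xb) = m (m e xb) (m f (sa xb))" using i(4) assoc[OF exS eS(2) star_S[OF i(1)]] by simp
  also have "\<dots> = m e (m xb (sa xb))" using gr assoc[OF eS(1) eS(3) star_S[OF i(1)]] by simp
  also have "\<dots> = m e xb" using star_r[OF i(1)] by simp
  finally have x1: "m e xb = m x (sa xb)" by simp
  have r2: "Rstar S m x (m e xb)" using R_Rstar[OF sg fac_S[OF a] star_S[OF i(1)] eS(2) x1 i(4)] .
  show ?thesis using Rstar_trans[OF r2] r1 gl by simp
qed

lemma fac_L: assumes a: "fac x xb e f" shows "Lstar S m x f"
proof -
  interpret D: AT S "\<lambda>a b. m b a" S0 by (rule dual)
  have "transversal_factorisation S (\<lambda>a b. m b a) S0 x xb f e" using a dual_fac_iff by blast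
  from D.fac_R[OF this] show ?thesis by (simp only: Rstar_op[of S m])
qed

lemma fac_unique_xb: "fac x xb e f \<Longrightarrow> fac x xb' e' f' \<Longrightarrow> xb' = xb"
proof -
  assume a: "fac x xb e f" and b: "fac x xb' e' f'"
  have u: "\<forall>x\<in>S. \<exists>!xb. \<exists>e f. fac x xb e f" using AT unfolding adequate_transversal_def by blast
  then show ?thesis using a b fac_S[OF a] by blast
qed

lemma fac_unique_e: assumes a: "fac x xb e f" and b: "fac x xb e' f'" shows "e' = e"
proof -
  have ie: "e \<in> idems S m" "e' \<in> idems S m" using fac_in a b by blast+
  have ee': "Rstar S m e e'" using Rstar_trans[OF Rstar_sym[OF fac_R[OF a]] fac_R[OF b]] .
  have r: "m e e' = e'" using Rstar_idems[OF ee' ie(1) ie(2)] by blast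
  have g1: "m e (pl xb) = e" using fac_GL[OF a] by blast
  have g2: "m (pl xb) e' = pl xb" using fac_GL[OF b] by blast
  have xb: "xb \<in> S0" using fac_in[OF a] by blast
  have "e' = m (m e (pl xb)) e'" using r g1 by simp
  also have "\<dots> = m e (m (pl xb) e')" using assoc[OF idemsD[OF ie(1)] plus_S[OF xb] idemsD[OF ie(2)]] .
  also have "\<dots> = e" using g1 g2 by simp
  finally show ?thesis .
qed

lemma fac_unique_f: assumes a: "fac x xb e f" and b: "fac x xb e' f'" shows "f' = f"
proof -
  interpret D: AT S "\<lambda>a b. m b a" S0 by (rule dual)
  have a': "transversal_factorisation S (\<lambda>a b. m b a) S0 x xb f e" using a dual_fac_iff by blast
  have b': "transversal_factorisation S (\<lambda>a b. m b a) S0 x xb f' e'" using b dual_fac_iff by blast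
  show ?thesis using D.fac_unique_e[OF a' b'] .
qed

lemma fac_bar: assumes a: "fac x xb e f" shows "bar x = xb"
  unfolding tbar_def
proof (rule the_equality)
  show "\<exists>e f. fac x xb e f" using a by blast
  fix y assume "\<exists>e f. fac x y e f"
  then show "y = xb" using fac_unique_xb[OF a] by blast
qed

lemma fac_ee: assumes a: "fac x xb e f" shows "ee x = e"
  unfolding te_def fac_bar[OF a]
proof (rule the_equality)
  show "\<exists>f. fac x xb e f" using a by blast
  fix y assume "\<exists>f. fac x xb y f"
  then show "y = e" using fac_unique_e[OF a] by blast
qed

lemma fac_ff: assumes a: "fac x xb e f" shows "ff x = f"
  unfolding tf_def fac_bar[OF a]
proof (rule the_equality)
  show "\<exists>e. fac x xb e f" using a by blast
  fix y assume "\<exists>e. fac x xb e y"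
  then show "y = f" using fac_unique_f[OF a] by blast
qed

lemma fac_all: "fac x xb e f \<Longrightarrow> bar x = xb \<and> ee x = e \<and> ff x = f"
  using fac_bar fac_ee fac_ff by blast

lemma fac_x: assumes x: "x \<in> S" shows "fac x (bar x) (ee x) (ff x)"
proof -
  obtain xb e f where "fac x xb e f" using AT x unfolding adequate_transversal_def by blast
  then show ?thesis using fac_all by metis
qed

lemma bar_S0: "x \<in> S \<Longrightarrow> bar x \<in> S0" using fac_in[OF fac_x] by blast
lemma bar_S: "x \<in> S \<Longrightarrow> bar x \<in> S" using S0S'[OF bar_S0] .
lemma ee_idem: "x \<in> S \<Longrightarrow> ee x \<in> idems S m" using fac_in[OF fac_x] by blast
lemma ff_idem: "x \<in> S \<Longrightarrow> ff x \<in> idems S m" using fac_in[OF fac_x] by blast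
lemma ee_S: "x \<in> S \<Longrightarrow> ee x \<in> S" using idemsD[OF ee_idem] .
lemma ff_S: "x \<in> S \<Longrightarrow> ff x \<in> S" using idemsD[OF ff_idem] .
lemma ee_sq: "x \<in> S \<Longrightarrow> m (ee x) (ee x) = ee x" using idemsD2[OF ee_idem] .
lemma ff_sq: "x \<in> S \<Longrightarrow> m (ff x) (ff x) = ff x" using idemsD2[OF ff_idem] .
lemma x_eq: "x \<in> S \<Longrightarrow> m (m (ee x) (bar x)) (ff x) = x" using fac_in[OF fac_x] by metis
lemma ee_pl: "x \<in> S \<Longrightarrow> m (ee x) (pl (bar x)) = ee x" using fac_GL[OF fac_x] by blast
lemma pl_ee: "x \<in> S \<Longrightarrow> m (pl (bar x)) (ee x) = pl (bar x)" using fac_GL[OF fac_x] by blast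
lemma sa_ff: "x \<in> S \<Longrightarrow> m (sa (bar x)) (ff x) = ff x" using fac_GR[OF fac_x] by blast
lemma ff_sa: "x \<in> S \<Longrightarrow> m (ff x) (sa (bar x)) = sa (bar x)" using fac_GR[OF fac_x] by blast
lemma x_R: "x \<in> S \<Longrightarrow> Rstar S m x (ee x)" using fac_R[OF fac_x] .
lemma x_L: "x \<in> S \<Longrightarrow> Lstar S m x (ff x)" using fac_L[OF fac_x] .

lemma fac_S0: assumes s: "s \<in> S0" shows "fac s s (pl s) (sa s)"
  unfolding transversal_factorisation_def
  using s idems0'[OF plus_idem[OF s]] idems0'[OF star_idem[OF s]] plus_l[OF s] star_r[OF s]
    GreenL_refl[OF plus_S[OF s]] GreenR_refl[OF star_S[OF s]] by simp

lemma bar_S0_eq: "s \<in> S0 \<Longrightarrow> bar s = s" using fac_all[OF fac_S0] by blast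
lemma ee_S0_eq: "s \<in> S0 \<Longrightarrow> ee s = pl s" using fac_all[OF fac_S0] by blast
lemma ff_S0_eq: "s \<in> S0 \<Longrightarrow> ff s = sa s" using fac_all[OF fac_S0] by blast

lemma prod_fac: assumes g: "g \<in> idems S m" and p: "p \<in> idems S0 m" and gl: "GreenL S m g p"
  and u: "u \<in> S0" and pu: "m p u = u"
  shows "fac (m g u) u (m g (pl u)) (sa u)"
proof -
  have gS: "g \<in> S" using idemsD[OF g] .
  have pS: "p \<in> S" using S0S' idems0D[OF p] by blast
  have uS: "u \<in> S" using S0S'[OF u] .
  have plS: "pl u \<in> S" using plus_S[OF u] .
  have gp: "m g p = g" and pg: "m p g = p" using GreenL_idem[OF sg g idems0'[OF p] gl] by auto
  have ppl: "m p (pl u) = pl u" using Rstar_canc1[OF plus_R[OF u] pS pu] .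
  have plp: "m (pl u) p = pl u" using ppl comm0[OF p plus_idem[OF u]] by simp
  have plg: "m (pl u) g = pl u"
  proof -
    have "m (pl u) g = m (m (pl u) p) g" using plp by simp
    also have "\<dots> = m (pl u) (m p g)" using assoc[OF plS pS gS] .
    also have "\<dots> = pl u" using pg plp by simp
    finally show ?thesis .
  qed
  have gplS: "m g (pl u) \<in> S" using cl[OF gS plS] .
  have idem: "m (m g (pl u)) (m g (pl u)) = m g (pl u)"
  proof -
    have "m (m g (pl u)) (m g (pl u)) = m g (m (pl u) (m g (pl u)))" using assoc[OF gS plS gplS] .
    also have "\<dots> = m g (m (m (pl u) g) (pl u))" using assoc[OF plS gS plS] by simp
    also have "\<dots> = m g (pl u)" using plg plus_sq[OF u] by simp
    finally show ?thesis .
  qed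
  have e1: "m (m (m g (pl u)) u) (sa u) = m g u"
  proof -
    have "m (m (m g (pl u)) u) (sa u) = m (m g (pl u)) (m u (sa u))" using assoc[OF gplS uS star_S[OF u]] .
    also have "\<dots> = m (m g (pl u)) u" using star_r[OF u] by simp
    also have "\<dots> = m g (m (pl u) u)" using assoc[OF gS plS uS] .
    also have "\<dots> = m g u" using plus_l[OF u] by simp
    finally show ?thesis .
  qed
  have GL: "GreenL S m (m g (pl u)) (pl u)"
  proof -
    have "m (pl u) (m g (pl u)) = pl u" using assoc[OF plS gS plS, symmetric] plg plus_sq[OF u] by simp
    then show ?thesis unfolding GreenL_def using gS plS gplS by metis
  qed
  show ?thesis unfolding transversal_factorisation_def
    using u idemsI[OF gplS idem] idems0'[OF star_idem[OF u]] e1 GL plus_of_idem[OF plus_idem[OF u]]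
      GreenR_refl[OF star_S[OF u]] by simp
qed

lemma prod_all: assumes "g \<in> idems S m" "p \<in> idems S0 m" "GreenL S m g p" "u \<in> S0" "m p u = u"
  shows "bar (m g u) = u \<and> ee (m g u) = m g (pl u) \<and> ff (m g u) = sa u"
  using fac_all[OF prod_fac[OF assms]] .

lemma prod_fac_d: assumes f: "f \<in> idems S m" and q: "q \<in> idems S0 m" and gr: "GreenR S m f q"
  and u: "u \<in> S0" and uq: "m u q = u"
  shows "fac (m u f) u (pl u) (m (sa u) f)"
proof -
  interpret D: AT S "\<lambda>a b. m b a" S0 by (rule dual)
  have f': "f \<in> idems S (\<lambda>a b. m b a)" using f by (simp only: idems_op[of S m])
  have q': "q \<in> idems S0 (\<lambda>a b. m b a)" using q by (simp only: idems_op[of S0 m])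
  have gr': "GreenL S (\<lambda>a b. m b a) f q" using gr by (simp only: GreenL_op[of S m])
  have "transversal_factorisation S (\<lambda>a b. m b a) S0 (m u f) u (m (sa u) f) (pl u)"
    using D.prod_fac[OF f' q' gr' u] uq by (simp only: aplus_op[of S0 m] astar_op[of S0 m])
  then show ?thesis using dual_fac_iff by blast
qed

lemma prod_all_d: assumes "f \<in> idems S m" "q \<in> idems S0 m" "GreenR S m f q" "u \<in> S0" "m u q = u"
  shows "bar (m u f) = u \<and> ee (m u f) = pl u \<and> ff (m u f) = m (sa u) f"
  using fac_all[OF prod_fac_d[OF assms]] .

lemma idem_fac: assumes g: "g \<in> idems S m" and p: "p \<in> idems S0 m" and gl: "GreenL S m g p"
  shows "fac g p g p"
proof -
  have gp: "m g p = g" using GreenL_idem[OF sg g idems0'[OF p] gl] by blast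
  have "fac (m g p) p (m g (pl p)) (sa p)" using prod_fac[OF g p gl idems0D[OF p] idems0D2[OF p]] .
  then show ?thesis using gp plus_of_idem[OF p] star_of_idem[OF p] by simp
qed

lemma idem_fac_d: assumes f: "f \<in> idems S m" and q: "q \<in> idems S0 m" and gr: "GreenR S m f q"
  shows "fac f q q f"
proof -
  have fq: "m q f = f" using GreenR_idem[OF sg f idems0'[OF q] gr] by blast
  have "fac (m q f) q (pl q) (m (sa q) f)" using prod_fac_d[OF f q gr idems0D[OF q] idems0D2[OF q]] .
  then show ?thesis using fq plus_of_idem[OF q] star_of_idem[OF q] by simp
qed

lemma ee_fac: assumes x: "x \<in> S" shows "fac (ee x) (pl (bar x)) (ee x) (pl (bar x))"
proof -
  have gl: "GreenL S m (ee x) (pl (bar x))"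
    unfolding GreenL_def using ee_pl[OF x] pl_ee[OF x] ee_S[OF x] plus_S[OF bar_S0[OF x]] by metis
  show ?thesis using idem_fac[OF ee_idem[OF x] plus_idem[OF bar_S0[OF x]] gl] .
qed

lemma ff_fac: assumes x: "x \<in> S" shows "fac (ff x) (sa (bar x)) (sa (bar x)) (ff x)"
proof -
  have gr: "GreenR S m (ff x) (sa (bar x))"
    unfolding GreenR_def using sa_ff[OF x] ff_sa[OF x] ff_S[OF x] star_S[OF bar_S0[OF x]] by metis
  show ?thesis using idem_fac_d[OF ff_idem[OF x] star_idem[OF bar_S0[OF x]] gr] .
qed

end

context AT begin

lemma ee_GL: assumes x: "x \<in> S" shows "GreenL S m (ee x) (pl (bar x))"
  unfolding GreenL_def using ee_pl[OF x] pl_ee[OF x] ee_S[OF x] plus_S[OF bar_S0[OF x]] by metis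
lemma ff_GR: assumes x: "x \<in> S" shows "GreenR S m (ff x) (sa (bar x))"
  unfolding GreenR_def using sa_ff[OF x] ff_sa[OF x] ff_S[OF x] star_S[OF bar_S0[OF x]] by metis

lemma TF_mono: assumes U: "U \<subseteq> S" and t: "transversal_factorisation U m S0 x xb e f" shows "fac x xb e f"
proof -
  have a: "xb \<in> S0" "e \<in> idems U m" "f \<in> idems U m" "x = m (m e xb) f"
    "GreenL U m e (pl xb)" "GreenR U m f (sa xb)" using t unfolding transversal_factorisation_def by auto
  have "e \<in> idems S m" "f \<in> idems S m" using idems_mono[OF U] a(2,3) by auto
  moreover have "GreenL S m e (pl xb)" using GreenL_mono[OF a(5) U] .
  moreover have "GreenR S m f (sa xb)" using GreenR_mono[OF a(6) U] .
  ultimately show ?thesis unfolding transversal_factorisation_def using a(1,4) by simp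
qed

lemma sub_t: assumes U: "U \<subseteq> S" and t: "transversal_factorisation U m S0 x xb e f"
  shows "tbar U m S0 x = xb \<and> te U m S0 x = e \<and> tf U m S0 x = f"
proof -
  have f: "fac x xb e f" using TF_mono[OF U t] .
  have u: "xb' = xb \<and> e' = e \<and> f' = f" if "transversal_factorisation U m S0 x xb' e' f'" for xb' e' f'
  proof -
    have f': "fac x xb' e' f'" using TF_mono[OF U that] .
    have "xb' = xb" using fac_unique_xb[OF f f'] .
    then show ?thesis using fac_unique_e[OF f] fac_unique_f[OF f] f' by blast
  qed
  have b: "tbar U m S0 x = xb" unfolding tbar_def
    by (rule the_equality) (use t u in blast)+
  have e: "te U m S0 x = e" unfolding te_def b
    by (rule the_equality) (use t u in blast)+
  have ff: "tf U m S0 x = f" unfolding tf_def b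
    by (rule the_equality) (use t u in blast)+
  show ?thesis using b e ff by blast
qed

end

locale LAT = AT + assumes la: "left_adequate S m"
begin

lemma la_uniq: assumes "a \<in> S" "e \<in> idems S m" "e' \<in> idems S m" "Rstar S m a e" "Rstar S m a e'"
  shows "e = e'"
proof -
  have "\<forall>a\<in>S. \<exists>!e. e \<in> idems S m \<and> Rstar S m a e" using la unfolding left_adequate_def by (rule conjunct2)
  then have "\<exists>!e. e \<in> idems S m \<and> Rstar S m a e" using assms(1) by (rule bspec)
  then obtain e0 where "\<forall>y. y \<in> idems S m \<and> Rstar S m a y \<longrightarrow> y = e0" by blast
  then show ?thesis using assms(2-5) by metis
qed

lemma la_ff: assumes x: "x \<in> S" shows "ff x = sa (bar x)"
proof -
  have q: "sa (bar x) \<in> idems S m" using idems0'[OF star_idem[OF bar_S0[OF x]]] .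
  have qS: "sa (bar x) \<in> S" using idemsD[OF q] .
  have r: "Rstar S m (sa (bar x)) (ff x)"
    using R_Rstar[OF sg qS ff_S[OF x] qS sa_ff[OF x, symmetric] ff_sa[OF x, symmetric]] .
  show ?thesis using la_uniq[OF qS ff_idem[OF x] q r Rstar_refl[OF qS]] .
qed

lemma la_x: assumes x: "x \<in> S" shows "m (ee x) (bar x) = x"
proof -
  have "x = m (m (ee x) (bar x)) (sa (bar x))" using x_eq[OF x] la_ff[OF x] by simp
  also have "\<dots> = m (ee x) (m (bar x) (sa (bar x)))" using assoc[OF ee_S[OF x] bar_S[OF x] star_S[OF bar_S0[OF x]]] .
  also have "\<dots> = m (ee x) (bar x)" using star_r[OF bar_S0[OF x]] by simp
  finally show ?thesis by simp
qed

lemma la_idem: assumes y: "y \<in> idems S m" shows "ee y = y"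
proof -
  have yS: "y \<in> S" using idemsD[OF y] .
  show ?thesis using la_uniq[OF yS ee_idem[OF yS] y x_R[OF yS] Rstar_refl[OF yS]] .
qed

lemma la_idem_bar: assumes y: "y \<in> idems S m" shows "bar y = pl (bar y)"
proof -
  have yS: "y \<in> S" using idemsD[OF y] .
  have "bar (ee y) = pl (bar y)" using fac_all[OF ee_fac[OF yS]] by blast
  then show ?thesis using la_idem[OF y] by simp
qed

end

locale RAT = AT + assumes ra: "right_adequate S m"
begin

lemma dualL: "LAT S (\<lambda>a b. m b a) S0"
proof -
  interpret D: AT S "\<lambda>a b. m b a" S0 by (rule dual)
  show ?thesis by unfold_locales (simp only: left_adequate_op[of S m] ra)
qed

lemma ra_ee: assumes x: "x \<in> S" shows "ee x = pl (bar x)"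
proof -
  interpret D: LAT S "\<lambda>a b. m b a" S0 by (rule dualL)
  show ?thesis using D.la_ff[OF x] by (simp only: tf_op tbar_op astar_op[of S0 m])
qed

lemma ra_x: assumes x: "x \<in> S" shows "m (bar x) (ff x) = x"
proof -
  interpret D: LAT S "\<lambda>a b. m b a" S0 by (rule dualL)
  show ?thesis using D.la_x[OF x] by (simp only: te_op tbar_op)
qed

lemma ra_idem: assumes y: "y \<in> idems S m" shows "ff y = y"
proof -
  interpret D: LAT S "\<lambda>a b. m b a" S0 by (rule dualL)
  have y': "y \<in> idems S (\<lambda>a b. m b a)" using y by (simp only: idems_op[of S m])
  show ?thesis using D.la_idem[OF y'] by (simp only: te_op)
qed

lemma ra_idem_bar: assumes y: "y \<in> idems S m" shows "bar y = sa (bar y)"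
proof -
  interpret D: LAT S "\<lambda>a b. m b a" S0 by (rule dualL)
  have y': "y \<in> idems S (\<lambda>a b. m b a)" using y by (simp only: idems_op[of S m])
  show ?thesis using D.la_idem_bar[OF y'] by (simp only: tbar_op aplus_op[of S0 m])
qed

end

definition Lset :: "'a set \<Rightarrow> ('a \<Rightarrow> 'a \<Rightarrow> 'a) \<Rightarrow> 'a set \<Rightarrow> 'a set" where
  "Lset S m S0 = {x \<in> S. m (te S m S0 x) (tbar S m S0 x) = x}"

locale QAT = AT + assumes qi: "quasi_ideal S m S0"
begin

abbreviation "LL \<equiv> Lset S m S0"

lemma qi': "s \<in> S0 \<Longrightarrow> x \<in> S \<Longrightarrow> t \<in> S0 \<Longrightarrow> m (m s x) t \<in> S0"
  using qi unfolding quasi_ideal_def by blast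

lemma LL_S: "LL \<subseteq> S" unfolding Lset_def by blast
lemma LL_S': "x \<in> LL \<Longrightarrow> x \<in> S" unfolding Lset_def by blast
lemma LL_eq: "x \<in> LL \<Longrightarrow> m (ee x) (bar x) = x" unfolding Lset_def by blast
lemma LL_I: "x \<in> S \<Longrightarrow> m (ee x) (bar x) = x \<Longrightarrow> x \<in> LL" unfolding Lset_def by blast

lemma S0_LL: assumes s: "s \<in> S0" shows "s \<in> LL"
  using LL_I[OF S0S'[OF s]] ee_S0_eq[OF s] bar_S0_eq[OF s] plus_l[OF s] by simp

lemma LL_fac: assumes x: "x \<in> LL" shows "fac x (bar x) (ee x) (sa (bar x))"
proof -
  have xS: "x \<in> S" using LL_S'[OF x] .
  have "m (m (ee x) (bar x)) (sa (bar x)) = m (ee x) (m (bar x) (sa (bar x)))"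
    using assoc[OF ee_S[OF xS] bar_S[OF xS] star_S[OF bar_S0[OF xS]]] .
  then have e: "x = m (m (ee x) (bar x)) (sa (bar x))" using star_r[OF bar_S0[OF xS]] LL_eq[OF x] by simp
  show ?thesis unfolding transversal_factorisation_def
    using bar_S0[OF xS] ee_idem[OF xS] idems0'[OF star_idem[OF bar_S0[OF xS]]] e ee_GL[OF xS]
      GreenR_refl[OF star_S[OF bar_S0[OF xS]]] by simp
qed

lemma LL_ff: "x \<in> LL \<Longrightarrow> ff x = sa (bar x)" using fac_all[OF LL_fac] by blast

lemma ee_LL: assumes x: "x \<in> S" shows "ee x \<in> LL"
proof -
  have "bar (ee x) = pl (bar x) \<and> ee (ee x) = ee x" using fac_all[OF ee_fac[OF x]] by blast
  then show ?thesis using LL_I[OF ee_S[OF x]] ee_pl[OF x] by simp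
qed

lemma LL_prod: assumes x: "x \<in> LL" and y: "y \<in> LL"
  shows "m x y \<in> LL \<and> bar (m x y) = m (m (bar x) (ee y)) (bar y)"
proof -
  have xS: "x \<in> S" and yS: "y \<in> S" using LL_S' x y by auto
  define s t u where "s = bar x" "t = bar y" "u = m (m s (ee y)) t"
  have s: "s \<in> S0" "s \<in> S" using bar_S0[OF xS] S0S' s_t_u_def by auto
  have t: "t \<in> S0" "t \<in> S" using bar_S0[OF yS] S0S' s_t_u_def by auto
  have eyS: "ee y \<in> S" and exS: "ee x \<in> S" using ee_S xS yS by auto
  have u: "u \<in> S0" using qi'[OF s(1) eyS t(1)] s_t_u_def by simp
  have uS: "u \<in> S" using S0S'[OF u] .
  have seyS: "m s (ee y) \<in> S" using cl[OF s(2) eyS] .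
  have xy: "m x y = m (ee x) u"
  proof -
    have "m x y = m (m (ee x) s) (m (ee y) t)" using LL_eq[OF x] LL_eq[OF y] s_t_u_def by simp
    also have "\<dots> = m (ee x) (m s (m (ee y) t))" using assoc[OF exS s(2) cl[OF eyS t(2)]] by simp
    also have "\<dots> = m (ee x) u" using assoc[OF s(2) eyS t(2)] s_t_u_def by simp
    finally show ?thesis .
  qed
  have pu: "m (pl s) u = u"
  proof -
    have "m (pl s) u = m (m (pl s) (m s (ee y))) t" using assoc[OF plus_S[OF s(1)] seyS t(2), symmetric] s_t_u_def by simp
    also have "\<dots> = u" using assoc[OF plus_S[OF s(1)] s(2) eyS, symmetric] plus_l[OF s(1)] s_t_u_def by simp
    finally show ?thesis .
  qed
  have pa: "bar (m (ee x) u) = u \<and> ee (m (ee x) u) = m (ee x) (pl u)"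
    using prod_all[OF ee_idem[OF xS] plus_idem[OF s(1)] _ u pu] ee_GL[OF xS] s_t_u_def by blast
  have "m (m (ee x) (pl u)) u = m (ee x) u" using assoc[OF exS plus_S[OF u] uS] plus_l[OF u] by simp
  then have "m (ee x) u \<in> LL" using LL_I[OF cl[OF exS uS]] pa by simp
  then show ?thesis using xy pa s_t_u_def by simp
qed

lemma LL_idem: assumes e: "e \<in> idems S m" and eL: "e \<in> LL"
  shows "fac e (bar e) e (bar e) \<and> bar e \<in> idems S0 m"
proof -
  have eS: "e \<in> S" using idemsD[OF e] .
  define q where "q = sa (bar e)"
  have q: "q \<in> idems S0 m" using star_idem[OF bar_S0[OF eS]] q_def by simp
  have qS: "q \<in> S" using S0S' idems0D[OF q] by blast
  have L: "Lstar S m e q" using x_L[OF eS] LL_ff[OF eL] q_def by simp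
  have qe: "m q e = q" using Lstar_canc1[OF L eS idemsD2[OF e]] .
  have eq: "m e q = e" using Lstar_idem[OF L idems0'[OF q]] .
  have GL: "GreenL S m e q" unfolding GreenL_def using eS qS eq qe by metis
  have f: "fac e q e q" using idem_fac[OF e q GL] .
  then have "bar e = q" using fac_all by blast
  then show ?thesis using f q by simp
qed

lemma GL_I: "a \<in> S \<Longrightarrow> b \<in> S \<Longrightarrow> m a b = a \<Longrightarrow> m b a = b \<Longrightarrow> GreenL S m a b"
  unfolding GreenL_def by metis

lemma LL_uniq: assumes x: "x \<in> LL" and e: "e \<in> idems S m" and eL: "e \<in> LL" and r: "Rstar LL m x e"
  shows "e = ee x"
proof -
  have xS: "x \<in> S" using LL_S'[OF x] .
  have eS: "e \<in> S" using idemsD[OF e] .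
  define g s p t where "g = ee x" "s = bar x" "p = pl s" "t = bar e"
  have gS: "g \<in> S" and gi: "g \<in> idems S m" and gL: "g \<in> LL" using ee_S[OF xS] ee_idem[OF xS] ee_LL[OF xS] g_s_p_t_def by auto
  have s: "s \<in> S0" using bar_S0[OF xS] g_s_p_t_def by simp
  have p: "p \<in> idems S0 m" "p \<in> S0" "p \<in> S" using plus_idem[OF s] plus_S0[OF s] plus_S[OF s] g_s_p_t_def by auto
  have gp: "m g p = g" "m p g = p" using ee_pl[OF xS] pl_ee[OF xS] g_s_p_t_def by auto
  have GLgp: "GreenL S m g p" using ee_GL[OF xS] g_s_p_t_def by simp
  have rg: "Rstar LL m x g" using Rstar_restrict[OF x_R[OF xS] LL_S x ee_LL[OF xS]] g_s_p_t_def by simp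
  have ge: "Rstar LL m e g" using Rstar_trans[OF Rstar_sym[OF r] rg] .
  have eidL: "e \<in> idems LL m" using e eL unfolding idems_def by blast
  have gidL: "g \<in> idems LL m" using gi gL unfolding idems_def by blast
  have eg: "m e g = g" "m g e = e" using Rstar_idems[OF ge eidL gidL] by auto
  have fe: "fac e t e t" and t: "t \<in> idems S0 m" using LL_idem[OF e eL] g_s_p_t_def by auto
  have tS0: "t \<in> S0" and tS: "t \<in> S" using idems0D[OF t] S0S' by auto
  have et: "m e t = e" "m t e = t" using fac_GL[OF fe] plus_of_idem[OF t] by auto
  have GLet: "GreenL S m e t" using GL_I[OF eS tS et] .
  have pe: "m p e = m (m p e) t" using et(1) assoc[OF p(3) eS tS] by simp
  have beta: "m p e \<in> S0" using qi'[OF p(2) eS tS0] pe by simp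
  have pbeta: "m p (m p e) = m p e" using assoc[OF p(3) p(3) eS, symmetric] idems0D2[OF p(1)] by simp
  have e_eq: "e = m g (m p e)" using eg(2) gp(1) assoc[OF gS p(3) eS] by metis
  have "bar (m g (m p e)) = m p e" using prod_all[OF gi p(1) GLgp beta pbeta] by blast
  then have t1: "t = m p e" using e_eq g_s_p_t_def by simp
  have tg: "m t g = m (m t g) p" using gp(1) assoc[OF tS gS p(3)] by simp
  have alpha: "m t g \<in> S0" using qi'[OF tS0 gS p(2)] tg by simp
  have talpha: "m t (m t g) = m t g" using assoc[OF tS tS gS, symmetric] idems0D2[OF t] by simp
  have g_eq: "g = m e (m t g)" using eg(1) et(1) assoc[OF eS tS gS] by metis
  have "bar (m e (m t g)) = m t g" using prod_all[OF e t GLet alpha talpha] by blast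
  moreover have "bar g = p" using fac_all[OF ee_fac[OF xS]] g_s_p_t_def by simp
  ultimately have p1: "p = m t g" using g_eq by simp
  have "m p t = t" using t1 pbeta by simp
  moreover have "m t p = p" using p1 talpha by simp
  moreover have "m p t = m t p" using comm0[OF p(1) t] .
  ultimately have tp: "t = p" by simp
  have "e = m e t" using et by simp
  also have "\<dots> = m e (m t g)" using p1 tp by simp
  also have "\<dots> = g" using g_eq by simp
  finally show ?thesis using g_s_p_t_def by simp
qed

lemma LL_sg: "semigroup_on LL m"
  unfolding semigroup_on_def using LL_prod assoc LL_S' by blast

lemma idems_LL: "idems LL m = idems S m \<inter> LL" unfolding idems_def using LL_S by blast

lemma LL_abundant: "abundant LL m"
proof -
  have R: "\<exists>e\<in>idems LL m. Rstar LL m a e" if a: "a \<in> LL" for a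
  proof -
    have aS: "a \<in> S" using LL_S'[OF a] .
    have "ee a \<in> idems LL m" using idems_LL ee_idem[OF aS] ee_LL[OF aS] by blast
    moreover have "Rstar LL m a (ee a)" using Rstar_restrict[OF x_R[OF aS] LL_S a ee_LL[OF aS]] .
    ultimately show ?thesis by blast
  qed
  have L: "\<exists>e\<in>idems LL m. Lstar LL m a e" if a: "a \<in> LL" for a
  proof -
    have aS: "a \<in> S" using LL_S'[OF a] .
    have s: "sa (bar a) \<in> LL" using S0_LL[OF star_S0[OF bar_S0[OF aS]]] .
    have "sa (bar a) \<in> idems LL m" using idems_LL idems0'[OF star_idem[OF bar_S0[OF aS]]] s by blast
    moreover have "Lstar LL m a (sa (bar a))" using Lstar_restrict[OF x_L[OF aS] LL_S a] LL_ff[OF a] s by simp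
    ultimately show ?thesis by blast
  qed
  show ?thesis unfolding abundant_def using LL_sg R L by blast
qed

lemma LL_left_adequate: "left_adequate LL m"
proof -
  have "\<exists>!e. e \<in> idems LL m \<and> Rstar LL m a e" if a: "a \<in> LL" for a
  proof (rule ex1I[of _ "ee a"])
    have aS: "a \<in> S" using LL_S'[OF a] .
    show "ee a \<in> idems LL m \<and> Rstar LL m a (ee a)"
      using idems_LL ee_idem[OF aS] ee_LL[OF aS] Rstar_restrict[OF x_R[OF aS] LL_S a ee_LL[OF aS]] by blast
    fix e assume "e \<in> idems LL m \<and> Rstar LL m a e"
    then show "e = ee a" using LL_uniq[OF a] idems_LL by blast
  qed
  then show ?thesis unfolding left_adequate_def using LL_abundant by blast
qed

lemma LL_TF: assumes x: "x \<in> LL" shows "transversal_factorisation LL m S0 x (bar x) (ee x) (sa (bar x))"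
proof -
  have xS: "x \<in> S" using LL_S'[OF x] .
  have f: "fac x (bar x) (ee x) (sa (bar x))" using LL_fac[OF x] .
  have eL: "ee x \<in> LL" using ee_LL[OF xS] .
  have pL: "pl (bar x) \<in> LL" using S0_LL[OF plus_S0[OF bar_S0[OF xS]]] .
  have sL: "sa (bar x) \<in> LL" using S0_LL[OF star_S0[OF bar_S0[OF xS]]] .
  have i1: "ee x \<in> idems LL m" using idems_LL ee_idem[OF xS] eL by blast
  have i2: "sa (bar x) \<in> idems LL m" using idems_LL idems0'[OF star_idem[OF bar_S0[OF xS]]] sL by blast
  have GL: "GreenL LL m (ee x) (pl (bar x))"
    unfolding GreenL_def using eL pL ee_pl[OF xS] pl_ee[OF xS] by metis
  show ?thesis using f i1 i2 GL GreenR_refl[OF sL] unfolding transversal_factorisation_def by blast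
qed

lemma LL_t: assumes x: "x \<in> LL"
  shows "tbar LL m S0 x = bar x \<and> te LL m S0 x = ee x \<and> tf LL m S0 x = sa (bar x)"
  using sub_t[OF LL_S LL_TF[OF x]] .

lemma LL_AT: "adequate_transversal LL m S0"
proof -
  have S0L: "S0 \<subseteq> LL" using S0_LL by blast
  have R: "\<exists>e\<in>idems S0 m. Rstar LL m a e" if a: "a \<in> S0" for a
    using plus_idem[OF a] Rstar_restrict[OF plus_R[OF a] LL_S S0_LL[OF a] S0_LL[OF plus_S0[OF a]]] by blast
  have L: "\<exists>e\<in>idems S0 m. Lstar LL m a e" if a: "a \<in> S0" for a
    using star_idem[OF a] Lstar_restrict[OF star_L[OF a] LL_S S0_LL[OF a] S0_LL[OF star_S0[OF a]]] by blast
  have ass: "adequate_star_subsemigroup LL m S0"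
    unfolding adequate_star_subsemigroup_def using S0L adS0 R L by blast
  have U: "\<exists>!xb. \<exists>e f. transversal_factorisation LL m S0 x xb e f" if x: "x \<in> LL" for x
  proof (rule ex1I[of _ "bar x"])
    show "\<exists>e f. transversal_factorisation LL m S0 x (bar x) e f" using LL_TF[OF x] by blast
    fix y assume "\<exists>e f. transversal_factorisation LL m S0 x y e f"
    then obtain e f where "transversal_factorisation LL m S0 x y e f" by blast
    then show "y = bar x" using fac_all[OF TF_mono[OF LL_S]] by blast
  qed
  show ?thesis unfolding adequate_transversal_def using LL_abundant ass U by blast
qed

lemma LL_qi: "quasi_ideal LL m S0"
  unfolding quasi_ideal_def using qi' LL_S' by blast

lemma LL_qiat: "qi_adequate_transversal LL m S0"
  unfolding qi_adequate_transversal_def using LL_AT LL_qi by blast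

end

lemma qiat_op: assumes q: "qi_adequate_transversal X (\<lambda>a b. m b a) S0"
  shows "qi_adequate_transversal X m S0"
proof -
  have a: "adequate_transversal X (\<lambda>a b. m b a) S0" and qo: "quasi_ideal X (\<lambda>a b. m b a) S0"
    using q unfolding qi_adequate_transversal_def by auto
  interpret E: AT X "\<lambda>a b. m b a" S0 using a by unfold_locales
  interpret F: AT X m S0 using E.dual by simp
  have "m (m s x) t \<in> S0" if "s \<in> S0" "x \<in> X" "t \<in> S0" for s x t
  proof -
    have "m s (m x t) \<in> S0" using qo that unfolding quasi_ideal_def by blast
    then show ?thesis using F.assoc[OF F.S0S'[OF that(1)] that(2) F.S0S'[OF that(3)]] by simp
  qed
  then show ?thesis unfolding qi_adequate_transversal_def quasi_ideal_def using F.AT by blast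
qed

context QAT begin

lemma dualQ: "QAT S (\<lambda>a b. m b a) S0"
proof -
  interpret D: AT S "\<lambda>a b. m b a" S0 by (rule dual)
  show ?thesis
  proof
    show "quasi_ideal S (\<lambda>a b. m b a) S0" unfolding quasi_ideal_def
    proof (intro ballI)
      fix s x t assume a: "s \<in> S0" "x \<in> S" "t \<in> S0"
      have "m (m t x) s \<in> S0" using qi'[OF a(3) a(2) a(1)] .
      then show "(\<lambda>a b. m b a) ((\<lambda>a b. m b a) s x) t \<in> S0"
        using assoc[OF S0S'[OF a(3)] a(2) S0S'[OF a(1)]] by simp
    qed
  qed
qed

abbreviation "RR \<equiv> Lset S (\<lambda>a b. m b a) S0"

lemma RR_def': "RR = {x \<in> S. m (bar x) (ff x) = x}"
  unfolding Lset_def te_op tbar_op by simp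

lemma RR_S': "a \<in> RR \<Longrightarrow> a \<in> S" unfolding RR_def' by blast
lemma RR_S: "RR \<subseteq> S" unfolding RR_def' by blast
lemma RR_eq: "a \<in> RR \<Longrightarrow> m (bar a) (ff a) = a" unfolding RR_def' by blast
lemma RR_I: "a \<in> S \<Longrightarrow> m (bar a) (ff a) = a \<Longrightarrow> a \<in> RR" unfolding RR_def' by blast

lemma RR_qiat: "qi_adequate_transversal RR m S0"
proof -
  interpret D: QAT S "\<lambda>a b. m b a" S0 by (rule dualQ)
  show ?thesis using qiat_op[OF D.LL_qiat] .
qed

lemma RR_ra: "right_adequate RR m"
proof -
  interpret D: QAT S "\<lambda>a b. m b a" S0 by (rule dualQ)
  show ?thesis using D.LL_left_adequate by (simp only: left_adequate_op[of RR m])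
qed

lemma RR_t: assumes a: "a \<in> RR"
  shows "tbar RR m S0 a = bar a \<and> tf RR m S0 a = ff a \<and> te RR m S0 a = pl (bar a)"
proof -
  interpret D: QAT S "\<lambda>a b. m b a" S0 by (rule dualQ)
  interpret E: AT RR m S0 using RR_qiat unfolding qi_adequate_transversal_def by unfold_locales blast
  show ?thesis using D.LL_t[OF a] unfolding E.tbar_op E.te_op E.tf_op tbar_op te_op astar_op[of S0 m] by simp
qed

lemma S0_RR: "s \<in> S0 \<Longrightarrow> s \<in> RR" using RR_I[OF S0S'] bar_S0_eq ff_S0_eq star_r by simp

lemma st_S0: assumes a: "a \<in> RR" and x: "x \<in> LL" shows "m a x \<in> S0"
proof -
  have aS: "a \<in> S" and xS: "x \<in> S" using RR_S' LL_S' a x by auto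
  have b: "bar a \<in> S" "bar a \<in> S0" and t: "bar x \<in> S" "bar x \<in> S0" using bar_S bar_S0 aS xS by auto
  have f: "ff a \<in> S" and e: "ee x \<in> S" using ff_S ee_S aS xS by auto
  have "m a x = m (m (bar a) (ff a)) (m (ee x) (bar x))" using RR_eq[OF a] LL_eq[OF x] by simp
  also have "\<dots> = m (m (bar a) (m (ff a) (ee x))) (bar x)"
    using assoc b t f e cl by simp
  finally show ?thesis using qi'[OF b(2) cl[OF f e] t(2)] by simp
qed

definition "TT = T_set LL m RR m S0"
definition "TM = T_mult LL m RR m S0 m"

lemma TT_iff: "(x, a) \<in> TT \<longleftrightarrow> x \<in> LL \<and> a \<in> RR \<and> bar x = bar a"
  unfolding TT_def T_set_def using LL_t RR_t by auto

lemma TM_eq: assumes "x \<in> LL" "b \<in> RR"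
  shows "TM (x, a) (y, b) = (m (ee x) (m a y), m (m a y) (ff b))"
  unfolding TM_def T_mult_def using LL_t[OF assms(1)] RR_t[OF assms(2)] by simp

definition "phi = (\<lambda>(x, a). m x (ff a))"

lemma phi_fac: assumes p: "(x, a) \<in> TT" shows "fac (phi (x, a)) (bar x) (ee x) (ff a)"
proof -
  have x: "x \<in> LL" and a: "a \<in> RR" and ba: "bar x = bar a" using p TT_iff by auto
  have xS: "x \<in> S" and aS: "a \<in> S" using LL_S' RR_S' x a by auto
  have "phi (x, a) = m (m (ee x) (bar x)) (ff a)" unfolding phi_def using LL_eq[OF x] by simp
  then show ?thesis unfolding transversal_factorisation_def
    using bar_S0[OF xS] ee_idem[OF xS] ff_idem[OF aS] ee_GL[OF xS] ff_GR[OF aS] ba by simp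
qed

lemma phi_bij: "bij_betw phi TT S"
proof (rule bij_betwI')
  fix p q assume p: "p \<in> TT" and q: "q \<in> TT"
  obtain x a where pxa: "p = (x, a)" by (cases p)
  obtain y b where qyb: "q = (y, b)" by (cases q)
  have fp: "fac (phi (x, a)) (bar x) (ee x) (ff a)" using phi_fac p pxa by simp
  have fq: "fac (phi (y, b)) (bar y) (ee y) (ff b)" using phi_fac q qyb by simp
  have x: "x \<in> LL" "a \<in> RR" "bar x = bar a" using p pxa TT_iff by auto
  have y: "y \<in> LL" "b \<in> RR" "bar y = bar b" using q qyb TT_iff by auto
  show "(phi p = phi q) = (p = q)"
  proof
    assume e: "phi p = phi q"
    then have "bar x = bar y \<and> ee x = ee y \<and> ff a = ff b"
      using fac_all[OF fp] fac_all[OF fq] pxa qyb by metis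
    then show "p = q" using LL_eq[OF x(1)] LL_eq[OF y(1)] RR_eq[OF x(2)] RR_eq[OF y(2)] x(3) y(3) pxa qyb
      by metis
  qed simp
next
  fix p assume "p \<in> TT" then show "phi p \<in> S" using phi_fac fac_S by (cases p) blast
next
  fix z assume z: "z \<in> S"
  define x a where "x = m (ee z) (bar z)" "a = m (bar z) (ff z)"
  have px: "bar x = bar z \<and> ee x = m (ee z) (pl (bar z))"
    using prod_all[OF ee_idem[OF z] plus_idem[OF bar_S0[OF z]] ee_GL[OF z] bar_S0[OF z] plus_l[OF bar_S0[OF z]]]
      x_a_def by simp
  have pa: "bar a = bar z \<and> ff a = m (sa (bar z)) (ff z)"
    using prod_all_d[OF ff_idem[OF z] star_idem[OF bar_S0[OF z]] ff_GR[OF z] bar_S0[OF z] star_r[OF bar_S0[OF z]]]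
      x_a_def by simp
  have xL: "x \<in> LL" using LL_I[of x] px ee_pl[OF z] cl[OF ee_S[OF z] bar_S[OF z]] x_a_def by simp
  have aR: "a \<in> RR" using RR_I[of a] pa sa_ff[OF z] cl[OF bar_S[OF z] ff_S[OF z]] x_a_def by simp
  have "(x, a) \<in> TT" using TT_iff xL aR px pa by simp
  moreover have "z = phi (x, a)" unfolding phi_def using pa sa_ff[OF z] x_eq[OF z] x_a_def by simp
  ultimately show "\<exists>p\<in>TT. z = phi p" by blast
qed

lemma phi_hom: assumes p: "p \<in> TT" and q: "q \<in> TT" shows "phi (TM p q) = m (phi p) (phi q)"
proof -
  obtain x a where pxa: "p = (x, a)" by (cases p)
  obtain y b where qyb: "q = (y, b)" by (cases q)
  have x: "x \<in> LL" "a \<in> RR" "bar x = bar a" using p pxa TT_iff by auto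
  have y: "y \<in> LL" "b \<in> RR" "bar y = bar b" using q qyb TT_iff by auto
  have xS: "x \<in> S" and aS: "a \<in> S" and yS: "y \<in> S" and bS: "b \<in> S" using LL_S' RR_S' x y by auto
  define s t ex ey fa fb w where "s = bar x" "t = bar y" "ex = ee x" "ey = ee y" "fa = ff a" "fb = ff b"
    "w = m a y"
  have S: "s \<in> S" "t \<in> S" "ex \<in> S" "ey \<in> S" "fa \<in> S" "fb \<in> S"
    using bar_S ee_S ff_S xS yS aS bS s_t_ex_ey_fa_fb_w_def by auto
  have t0: "t \<in> S0" using bar_S0[OF yS] s_t_ex_ey_fa_fb_w_def by simp
  have xe: "x = m ex s" using LL_eq[OF x(1)] s_t_ex_ey_fa_fb_w_def by simp
  have ye: "y = m ey t" using LL_eq[OF y(1)] s_t_ex_ey_fa_fb_w_def by simp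
  have ae: "a = m s fa" using RR_eq[OF x(2)] x(3) s_t_ex_ey_fa_fb_w_def by simp
  have be: "b = m t fb" using RR_eq[OF y(2)] y(3) s_t_ex_ey_fa_fb_w_def by simp
  have w0: "w \<in> S0" using st_S0[OF x(2) y(1)] s_t_ex_ey_fa_fb_w_def by simp
  have wS: "w \<in> S" using S0S'[OF w0] .
  have tb: "bar b = t" using y(3) s_t_ex_ey_fa_fb_w_def by simp
  have wq: "m w (sa (bar b)) = w"
  proof -
    have "m w (sa (bar b)) = m (m a y) (sa t)" using tb s_t_ex_ey_fa_fb_w_def(7) by simp
    also have "\<dots> = m (m a (m ey t)) (sa t)" using ye by simp
    also have "\<dots> = m a (m ey (m t (sa t)))" using assoc S cl aS star_S[OF t0] by simp
    also have "\<dots> = m a (m ey t)" using star_r[OF t0] by simp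
    also have "\<dots> = w" using ye s_t_ex_ey_fa_fb_w_def(7) by simp
    finally show ?thesis .
  qed
  have ffw: "ff (m w fb) = m (sa w) fb"
    using prod_all_d[OF ff_idem[OF bS] star_idem[OF bar_S0[OF bS]] ff_GR[OF bS] w0 wq] s_t_ex_ey_fa_fb_w_def by simp
  have "TM p q = (m ex w, m w fb)" using TM_eq[OF x(1) y(2)] pxa qyb s_t_ex_ey_fa_fb_w_def by simp
  then have "phi (TM p q) = m (m ex w) (m (sa w) fb)" unfolding phi_def using ffw by simp
  also have "\<dots> = m ex (m (m w (sa w)) fb)" using assoc S wS star_S[OF w0] cl by simp
  also have "\<dots> = m ex (m w fb)" using star_r[OF w0] by simp
  also have "\<dots> = m (m x fa) (m y fb)"
    unfolding s_t_ex_ey_fa_fb_w_def(7) using xe ae assoc S cl yS by simp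
  also have "\<dots> = m (phi p) (phi q)" unfolding phi_def using pxa qyb s_t_ex_ey_fa_fb_w_def by simp
  finally show ?thesis .
qed

lemma phi_T0: "phi ` T0_set S0 = S0"
proof -
  have "phi (s, s) = s" if "s \<in> S0" for s unfolding phi_def using ff_S0_eq[OF that] star_r[OF that] by simp
  then show ?thesis unfolding T0_set_def by force
qed

lemma cd: "construction_data LL m RR m S0 m"
proof -
  have C1: "m (m (m a y) (tf RR m S0 b)) z = m a (m (te LL m S0 y) (m b z))"
    if y: "y \<in> LL" and z: "z \<in> LL" and a: "a \<in> RR" and b: "b \<in> RR" and e: "tbar LL m S0 y = tbar RR m S0 b"
    for y z a b
  proof -
    have yS: "y \<in> S" and zS: "z \<in> S" and aS: "a \<in> S" and bS: "b \<in> S" using LL_S' RR_S' y z a b by auto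
    define t ey fb where "t = bar y" "ey = ee y" "fb = ff b"
    have S: "t \<in> S" "ey \<in> S" "fb \<in> S" using bar_S ee_S ff_S yS bS t_ey_fb_def by auto
    have bb: "bar b = t" using e LL_t[OF y] RR_t[OF b] t_ey_fb_def by simp
    have ye: "y = m ey t" using LL_eq[OF y] t_ey_fb_def by simp
    have be: "b = m t fb" using RR_eq[OF b] bb t_ey_fb_def by simp
    have "m (m (m a y) (tf RR m S0 b)) z = m (m (m a (m ey t)) fb) z"
      using RR_t[OF b] ye t_ey_fb_def by simp
    also have "\<dots> = m a (m ey (m (m t fb) z))" using assoc S cl aS zS by simp
    also have "\<dots> = m a (m (te LL m S0 y) (m b z))" using LL_t[OF y] be t_ey_fb_def by simp
    finally show ?thesis .
  qed
  show ?thesis unfolding construction_data_def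
    using adS0 LL_left_adequate RR_ra LL_qiat RR_qiat st_S0 C1 by blast
qed

lemma converse: "\<exists>L mL R mR st. construction_data L mL R mR S0 st \<and>
               (\<forall>s\<in>S0. \<forall>t\<in>S0. mL s t = m s t) \<and>
               (\<exists>\<phi>. sg_iso (T_set L mL R mR S0) (T_mult L mL R mR S0 st) S m \<phi> \<and>
                     \<phi> ` T0_set S0 = S0)"
proof -
  have "sg_iso TT TM S m phi" unfolding sg_iso_def using phi_bij phi_hom by blast
  then show ?thesis using cd phi_T0 unfolding TT_def TM_def by blast
qed

end

locale CD =
  fixes L :: "'a set" and mL :: "'a \<Rightarrow> 'a \<Rightarrow> 'a" and R :: "'a set" and mR :: "'a \<Rightarrow> 'a \<Rightarrow> 'a"
    and S0 :: "'a set" and st :: "'a \<Rightarrow> 'a \<Rightarrow> 'a"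
  assumes cd: "construction_data L mL R mR S0 st"
begin

lemma laL: "left_adequate L mL" using cd unfolding construction_data_def by blast
lemma raR: "right_adequate R mR" using cd unfolding construction_data_def by blast
lemma agree: "\<forall>s\<in>S0. \<forall>t\<in>S0. mL s t = mR s t" using cd unfolding construction_data_def by blast
lemma qL: "qi_adequate_transversal L mL S0" using cd unfolding construction_data_def by blast
lemma qR: "qi_adequate_transversal R mR S0" using cd unfolding construction_data_def by blast
lemma stS0: "a \<in> R \<Longrightarrow> x \<in> L \<Longrightarrow> st a x \<in> S0" using cd unfolding construction_data_def by blast
lemma C1: "y \<in> L \<Longrightarrow> z \<in> L \<Longrightarrow> a \<in> R \<Longrightarrow> b \<in> R \<Longrightarrow> tbar L mL S0 y = tbar R mR S0 b \<Longrightarrow>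
   st (mR (st a y) (tf R mR S0 b)) z = st a (mL (te L mL S0 y) (st b z))"
  using cd unfolding construction_data_def by blast
lemma C2a: "a \<in> R \<Longrightarrow> x \<in> L \<Longrightarrow> a \<in> S0 \<Longrightarrow> st a x = mL a x"
  using cd unfolding construction_data_def by blast
lemma C2b: "a \<in> R \<Longrightarrow> x \<in> L \<Longrightarrow> x \<in> S0 \<Longrightarrow> st a x = mR a x"
  using cd unfolding construction_data_def by blast

sublocale AL: LAT L mL S0
  using qL laL unfolding qi_adequate_transversal_def by unfold_locales blast+
sublocale AR: RAT R mR S0
  using qR raR unfolding qi_adequate_transversal_def by unfold_locales blast+

abbreviation "bL \<equiv> tbar L mL S0"
abbreviation "eL \<equiv> te L mL S0"
abbreviation "fL \<equiv> tf L mL S0"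
abbreviation "bR \<equiv> tbar R mR S0"
abbreviation "eR \<equiv> te R mR S0"
abbreviation "fR \<equiv> tf R mR S0"
abbreviation "P \<equiv> aplus S0 mL"
abbreviation "Q \<equiv> astar S0 mL"

lemma m0: "s \<in> S0 \<Longrightarrow> t \<in> S0 \<Longrightarrow> mR s t = mL s t" using agree by simp
lemma plR: "aplus S0 mR = P" using aplus_cong[OF cong_sym[OF agree]] by simp
lemma saR: "astar S0 mR = Q" using astar_cong[OF cong_sym[OF agree]] by simp
lemma idR: "idems S0 mR = idems S0 mL" using idems_cong[OF cong_sym[OF agree]] by simp

lemma L0: "s \<in> S0 \<Longrightarrow> s \<in> L" using AL.S0S by blast
lemma R0: "s \<in> S0 \<Longrightarrow> s \<in> R" using AR.S0S by blast
lemma cl0: "s \<in> S0 \<Longrightarrow> t \<in> S0 \<Longrightarrow> mL s t \<in> S0" using AL.cl0 .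
lemma P0: "s \<in> S0 \<Longrightarrow> P s \<in> S0" using AL.plus_S0 .
lemma Q0: "s \<in> S0 \<Longrightarrow> Q s \<in> S0" using AL.star_S0 .
lemma Pl: "s \<in> S0 \<Longrightarrow> mL (P s) s = s" using AL.plus_l .
lemma Qr: "s \<in> S0 \<Longrightarrow> mL s (Q s) = s" using AL.star_r .
lemma PP: "s \<in> S0 \<Longrightarrow> mL (P s) (P s) = P s" using AL.plus_sq .
lemma QQ: "s \<in> S0 \<Longrightarrow> mL (Q s) (Q s) = Q s" using AL.star_sq .
lemma Pid: "s \<in> S0 \<Longrightarrow> P s \<in> idems S0 mL" using AL.plus_idem .
lemma Qid: "s \<in> S0 \<Longrightarrow> Q s \<in> idems S0 mL" using AL.star_idem .
lemma PQ_idem: "e \<in> idems S0 mL \<Longrightarrow> P e = e \<and> Q e = e" using AL.plus_of_idem AL.star_of_idem by blast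

lemma bL0: "s \<in> S0 \<Longrightarrow> bL s = s" using AL.bar_S0_eq .
lemma eL0: "s \<in> S0 \<Longrightarrow> eL s = P s" using AL.ee_S0_eq .
lemma bR0: "s \<in> S0 \<Longrightarrow> bR s = s" using AR.bar_S0_eq .
lemma fR0: "s \<in> S0 \<Longrightarrow> fR s = Q s" using AR.ff_S0_eq saR by simp

lemma bLS0: "x \<in> L \<Longrightarrow> bL x \<in> S0" using AL.bar_S0 .
lemma bRS0: "a \<in> R \<Longrightarrow> bR a \<in> S0" using AR.bar_S0 .
lemma eLL: "x \<in> L \<Longrightarrow> eL x \<in> L" using AL.ee_S .
lemma fRR: "a \<in> R \<Longrightarrow> fR a \<in> R" using AR.ff_S .
lemma xL: "x \<in> L \<Longrightarrow> mL (eL x) (bL x) = x" using AL.la_x .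
lemma aR: "a \<in> R \<Longrightarrow> mR (bR a) (fR a) = a" using AR.ra_x .
lemma eLP: "x \<in> L \<Longrightarrow> mL (eL x) (P (bL x)) = eL x" using AL.ee_pl .
lemma PeL: "x \<in> L \<Longrightarrow> mL (P (bL x)) (eL x) = P (bL x)" using AL.pl_ee .
lemma QfR: "a \<in> R \<Longrightarrow> mR (Q (bR a)) (fR a) = fR a" using AR.sa_ff saR by simp
lemma fRQ: "a \<in> R \<Longrightarrow> mR (fR a) (Q (bR a)) = Q (bR a)" using AR.ff_sa saR by simp
lemma eLe: "x \<in> L \<Longrightarrow> mL (eL x) (eL x) = eL x" using AL.ee_sq .
lemma fRf: "a \<in> R \<Longrightarrow> mR (fR a) (fR a) = fR a" using AR.ff_sq .
lemma clL: "x \<in> L \<Longrightarrow> y \<in> L \<Longrightarrow> mL x y \<in> L" using AL.cl .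
lemma clR: "x \<in> R \<Longrightarrow> y \<in> R \<Longrightarrow> mR x y \<in> R" using AR.cl .
lemma asL: "x \<in> L \<Longrightarrow> y \<in> L \<Longrightarrow> z \<in> L \<Longrightarrow> mL (mL x y) z = mL x (mL y z)" using AL.assoc .
lemma asR: "x \<in> R \<Longrightarrow> y \<in> R \<Longrightarrow> z \<in> R \<Longrightarrow> mR (mR x y) z = mR x (mR y z)" using AR.assoc .
lemma bL_eL: "x \<in> L \<Longrightarrow> bL (eL x) = P (bL x) \<and> eL (eL x) = eL x" using AL.fac_all[OF AL.ee_fac] by blast
lemma bR_fR: "a \<in> R \<Longrightarrow> bR (fR a) = Q (bR a) \<and> fR (fR a) = fR a"
  using AR.fac_all[OF AR.ff_fac] saR by simp

lemma G1: assumes a: "a \<in> R" and y: "y \<in> L" shows "mL (P (bR a)) (st a y) = st a y"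
proof -
  define s where "s = bR a"
  have s: "s \<in> S0" using bRS0[OF a] s_def by simp
  have ps: "P s \<in> S0" using P0[OF s] .
  have w: "st a y \<in> S0" using stS0[OF a y] .
  have w2: "mL (P s) (st a y) \<in> S0" using cl0[OF ps w] .
  have "st (mR (st (P s) s) (fR a)) y = st (P s) (mL (eL s) (st a y))"
    using C1[OF L0[OF s] y R0[OF ps] a] bL0[OF s] s_def by simp
  moreover have "st (P s) s = s" using C2a[OF R0[OF ps] L0[OF s] ps] Pl[OF s] by simp
  moreover have "mR s (fR a) = a" using aR[OF a] s_def by simp
  moreover have "mL (eL s) (st a y) = mL (P s) (st a y)" using eL0[OF s] by simp
  moreover have "st (P s) (mL (P s) (st a y)) = mL (P s) (st a y)"
    using C2a[OF R0[OF ps] L0[OF w2] ps] asL[OF L0[OF ps] L0[OF ps] L0[OF w]] PP[OF s] by simp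
  ultimately show ?thesis using s_def by simp
qed

lemma G2: assumes a: "a \<in> R" and y: "y \<in> L" shows "mR (st a y) (Q (bL y)) = st a y"
proof -
  define t where "t = bL y"
  have t: "t \<in> S0" using bLS0[OF y] t_def by simp
  have qt: "Q t \<in> S0" using Q0[OF t] .
  have w: "st a y \<in> S0" using stS0[OF a y] .
  have w2: "mR (st a y) (Q t) \<in> S0" using cl0[OF w qt] m0[OF w qt] by simp
  have "st (mR (st a y) (fR t)) (Q t) = st a (mL (eL y) (st t (Q t)))"
    using C1[OF y L0[OF qt] a R0[OF t]] bR0[OF t] t_def by simp
  moreover have "fR t = Q t" using fR0[OF t] .
  moreover have "st t (Q t) = t" using C2a[OF R0[OF t] L0[OF qt] t] Qr[OF t] by simp
  moreover have "mL (eL y) t = y" using xL[OF y] t_def by simp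
  moreover have "st (mR (st a y) (Q t)) (Q t) = mR (st a y) (Q t)"
    using C2b[OF R0[OF w2] L0[OF qt] qt] asR[OF R0[OF w] R0[OF qt] R0[OF qt]] QQ[OF t] m0[OF qt qt] by simp
  ultimately show ?thesis using t_def by simp
qed

end

context CD begin

abbreviation "T \<equiv> T_set L mL R mR S0"
abbreviation "Tm \<equiv> T_mult L mL R mR S0 st"

lemma T_iff: "(x, a) \<in> T \<longleftrightarrow> x \<in> L \<and> a \<in> R \<and> bL x = bR a"
  unfolding T_set_def by simp

lemma Tm_eq: "Tm (x, a) (y, b) = (mL (eL x) (st a y), mR (st a y) (fR b))"
  unfolding T_mult_def by simp

lemma prodL: assumes x: "x \<in> L" and w: "w \<in> S0" and pw: "mL (P (bL x)) w = w"
  shows "bL (mL (eL x) w) = w \<and> eL (mL (eL x) w) = mL (eL x) (P w) \<and> mL (eL x) w \<in> L"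
  using AL.prod_all[OF AL.ee_idem[OF x] Pid[OF bLS0[OF x]] AL.ee_GL[OF x] w pw] clL[OF eLL[OF x] L0[OF w]]
  by blast

lemma prodR: assumes a: "a \<in> R" and w: "w \<in> S0" and wq: "mR w (Q (bR a)) = w"
  shows "bR (mR w (fR a)) = w \<and> fR (mR w (fR a)) = mR (Q w) (fR a) \<and> mR w (fR a) \<in> R"
proof -
  have q: "astar S0 mR (bR a) \<in> idems S0 mR" using AR.star_idem[OF bRS0[OF a]] .
  have "bR (mR w (fR a)) = w \<and> eR (mR w (fR a)) = aplus S0 mR w \<and> fR (mR w (fR a)) = mR (astar S0 mR w) (fR a)"
    using AR.prod_all_d[OF AR.ff_idem[OF a] q AR.ff_GR[OF a] w] wq saR by simp
  then show ?thesis using saR clR[OF R0[OF w] fRR[OF a]] by simp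
qed

lemma Tprod: assumes p: "(x, a) \<in> T" and q: "(y, b) \<in> T"
  shows "Tm (x, a) (y, b) \<in> T \<and>
    bL (mL (eL x) (st a y)) = st a y \<and> eL (mL (eL x) (st a y)) = mL (eL x) (P (st a y)) \<and>
    bR (mR (st a y) (fR b)) = st a y \<and> fR (mR (st a y) (fR b)) = mR (Q (st a y)) (fR b)"
proof -
  have x: "x \<in> L" "a \<in> R" "bL x = bR a" and y: "y \<in> L" "b \<in> R" "bL y = bR b" using p q T_iff by auto
  have w: "st a y \<in> S0" using stS0[OF x(2) y(1)] .
  have pw: "mL (P (bL x)) (st a y) = st a y" using G1[OF x(2) y(1)] x(3) by simp
  have wq: "mR (st a y) (Q (bR b)) = st a y" using G2[OF x(2) y(1)] y(3) by simp
  show ?thesis using prodL[OF x(1) w pw] prodR[OF y(2) w wq] T_iff Tm_eq by simp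
qed

lemma T_closed: "p \<in> T \<Longrightarrow> q \<in> T \<Longrightarrow> Tm p q \<in> T"
  using Tprod by (cases p, cases q) blast

lemma T_assoc: assumes p: "(x, a) \<in> T" and q: "(y, b) \<in> T" and r: "(z, c) \<in> T"
  shows "Tm (Tm (x, a) (y, b)) (z, c) = Tm (x, a) (Tm (y, b) (z, c))"
proof -
  have x: "x \<in> L" "a \<in> R" "bL x = bR a" and y: "y \<in> L" "b \<in> R" "bL y = bR b"
    and z: "z \<in> L" "c \<in> R" "bL z = bR c" using p q r T_iff by auto
  define u v where "u = st a y" "v = st b z"
  have u: "u \<in> S0" and v: "v \<in> S0" using stS0 x y z u_v_def by auto
  have tp1: "bL (mL (eL x) u) = u \<and> eL (mL (eL x) u) = mL (eL x) (P u) \<and>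
    bR (mR u (fR b)) = u \<and> fR (mR u (fR b)) = mR (Q u) (fR b)" using Tprod[OF p q] u_v_def by simp
  have tp2: "bL (mL (eL y) v) = v \<and> eL (mL (eL y) v) = mL (eL y) (P v) \<and>
    bR (mR v (fR c)) = v \<and> fR (mR v (fR c)) = mR (Q v) (fR c)" using Tprod[OF q r] u_v_def by simp
  have A1R: "mR u (fR b) \<in> R" using clR[OF R0[OF u] fRR[OF y(2)]] .
  have Y1L: "mL (eL y) v \<in> L" using clL[OF eLL[OF y(1)] L0[OF v]] .
  define w where "w = st (mR u (fR b)) z"
  have w: "w \<in> S0" using stS0[OF A1R z(1)] w_def by simp
  have wC: "w = st a (mL (eL y) v)" using C1[OF y(1) z(1) x(2) y(2) y(3)] u_v_def w_def by simp
  have lhs: "Tm (Tm (x, a) (y, b)) (z, c) = (mL (mL (eL x) (P u)) w, mR w (fR c))"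
    using Tm_eq tp1 u_v_def w_def by simp
  have rhs: "Tm (x, a) (Tm (y, b) (z, c)) = (mL (eL x) w, mR w (mR (Q v) (fR c)))"
    using Tm_eq tp2 u_v_def wC by simp
  have g1: "mL (P u) w = w" using G1[OF A1R z(1)] tp1 w_def by simp
  have g2: "mR w (Q v) = w" using G2[OF x(2) Y1L] tp2 wC by simp
  have "mL (mL (eL x) (P u)) w = mL (eL x) w"
    using asL[OF eLL[OF x(1)] L0[OF P0[OF u]] L0[OF w]] g1 by simp
  moreover have "mR w (mR (Q v) (fR c)) = mR w (fR c)"
    using asR[OF R0[OF w] R0[OF Q0[OF v]] fRR[OF z(2)], symmetric] g2 by simp
  ultimately show ?thesis using lhs rhs by simp
qed

lemma T_sg: "semigroup_on T Tm"
  unfolding semigroup_on_def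
proof (intro conjI ballI)
  fix p q assume "p \<in> T" "q \<in> T" then show "Tm p q \<in> T" using T_closed by blast
next
  fix p q r assume "p \<in> T" "q \<in> T" "r \<in> T"
  then show "Tm (Tm p q) r = Tm p (Tm q r)" using T_assoc by (cases p, cases q, cases r) blast
qed

end

lemma LstarI: "a \<in> S \<Longrightarrow> b \<in> S \<Longrightarrow> (\<And>x y. x \<in> S \<Longrightarrow> y \<in> S \<Longrightarrow> (m a x = m a y) = (m b x = m b y))
  \<Longrightarrow> (\<And>x. x \<in> S \<Longrightarrow> (m a x = a) = (m b x = b)) \<Longrightarrow> Lstar S m a b"
  unfolding Lstar_def by (intro conjI ballI) assumption+

context CD begin

lemma PsX: assumes x: "x \<in> L" shows "mL (P (bL x)) x = bL x"
proof -
  have "mL (P (bL x)) x = mL (P (bL x)) (mL (eL x) (bL x))" using xL[OF x] by simp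
  also have "\<dots> = mL (mL (P (bL x)) (eL x)) (bL x)"
    using asL[OF L0[OF P0[OF bLS0[OF x]]] eLL[OF x] L0[OF bLS0[OF x]]] by simp
  also have "\<dots> = bL x" using PeL[OF x] Pl[OF bLS0[OF x]] by simp
  finally show ?thesis .
qed

lemma aQs: assumes a: "a \<in> R" shows "mR a (Q (bR a)) = bR a"
proof -
  define s where "s = bR a"
  have s: "s \<in> S0" using bRS0[OF a] s_def by simp
  have "mR a (Q s) = mR (mR s (fR a)) (Q s)" using aR[OF a] s_def by simp
  also have "\<dots> = mR s (mR (fR a) (Q s))" using asR[OF R0[OF s] fRR[OF a] R0[OF Q0[OF s]]] .
  also have "\<dots> = s" using fRQ[OF a] Qr[OF s] m0[OF s Q0[OF s]] s_def by simp
  finally show ?thesis using s_def by simp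
qed

lemma E_T: assumes p: "(x, a) \<in> T" shows "(eL x, P (bL x)) \<in> T"
proof -
  have x: "x \<in> L" using p T_iff by auto
  show ?thesis using T_iff eLL[OF x] R0[OF P0[OF bLS0[OF x]]] bL_eL[OF x] bR0[OF P0[OF bLS0[OF x]]] by simp
qed

lemma F_T: assumes p: "(x, a) \<in> T" shows "(Q (bL x), fR a) \<in> T"
proof -
  have x: "x \<in> L" "a \<in> R" "bL x = bR a" using p T_iff by auto
  show ?thesis using T_iff L0[OF Q0[OF bLS0[OF x(1)]]] fRR[OF x(2)] bL0[OF Q0[OF bLS0[OF x(1)]]] bR_fR[OF x(2)] x(3)
    by simp
qed

lemma Rkey: assumes p: "(x, a) \<in> T" and q: "(y, b) \<in> T"
  shows "\<exists>w. w \<in> S0 \<and> mL w (P (bL x)) = w \<and>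
     Tm (y, b) (x, a) = (mL (eL y) (mL w (bL x)), mR (mL w (bL x)) (fR a)) \<and>
     Tm (y, b) (eL x, P (bL x)) = (mL (eL y) w, w)"
proof -
  have x: "x \<in> L" "a \<in> R" "bL x = bR a" and y: "y \<in> L" "b \<in> R" "bL y = bR b" using p q T_iff by auto
  define s w where "s = bL x" "w = st b (eL x)"
  have s: "s \<in> S0" using bLS0[OF x(1)] s_w_def by simp
  have ps: "P s \<in> S0" using P0[OF s] .
  have PPs: "P (P s) = P s \<and> Q (P s) = P s" using PQ_idem[OF Pid[OF s]] .
  have w: "w \<in> S0" using stS0[OF y(2) eLL[OF x(1)]] s_w_def by simp
  have bex: "bL (eL x) = P s" and eex: "eL (eL x) = eL x" using bL_eL[OF x(1)] s_w_def by auto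
  have wP: "mR w (P s) = w" using G2[OF y(2) eLL[OF x(1)]] bex PPs s_w_def by simp
  have wPL: "mL w (P s) = w" using wP m0[OF w ps] by simp
  have c1: "st (mR w (fR (P s))) x = st b (mL (eL (eL x)) (st (P s) x))"
    using C1[OF eLL[OF x(1)] x(1) y(2) R0[OF ps]] bex bR0[OF ps] s_w_def by simp
  have l: "st (mR w (fR (P s))) x = mL w x" using fR0[OF ps] PPs wP C2a[OF R0[OF w] x(1) w] by simp
  have r: "mL (eL (eL x)) (st (P s) x) = x"
    using eex C2a[OF R0[OF ps] x(1) ps] PsX[OF x(1)] xL[OF x(1)] s_w_def by simp
  have sbx: "st b x = mL w x" using c1 l r by simp
  have wex: "mL w (eL x) = w"
  proof -
    have "mL w (eL x) = mL (mL w (P s)) (eL x)" using wPL by simp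
    also have "\<dots> = mL w (mL (P s) (eL x))" using asL[OF L0[OF w] L0[OF ps] eLL[OF x(1)]] .
    also have "\<dots> = w" using PeL[OF x(1)] wPL s_w_def by simp
    finally show ?thesis .
  qed
  have "mL w x = mL w (mL (eL x) s)" using xL[OF x(1)] s_w_def by simp
  also have "\<dots> = mL w s" using asL[OF L0[OF w] eLL[OF x(1)] L0[OF s], symmetric] wex by simp
  finally have bx: "st b x = mL w s" using sbx by simp
  have t1: "Tm (y, b) (x, a) = (mL (eL y) (mL w s), mR (mL w s) (fR a))" using Tm_eq bx by simp
  have t2: "Tm (y, b) (eL x, P s) = (mL (eL y) w, w)" using Tm_eq s_w_def fR0[OF ps] PPs wP by simp
  show ?thesis using w wPL t1 t2 s_w_def by blast
qed

lemma T_R: assumes p: "(x, a) \<in> T" shows "Rstar T Tm (x, a) (eL x, P (bL x))"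
proof -
  have x: "x \<in> L" "a \<in> R" "bL x = bR a" using p T_iff by auto
  define s where "s = bL x"
  have s: "s \<in> S0" using bLS0[OF x(1)] s_def by simp
  have ps: "P s \<in> S0" using P0[OF s] .
  have Rs: "Rstar L mL s (P s)" using AL.plus_R[OF s] .
  have ae: "a = mR s (fR a)" using aR[OF x(2)] x(3) s_def by simp
  have xe: "x = mL (eL x) s" using xL[OF x(1)] s_def by simp
  have sQ: "mR (mL w s) (Q s) = mL w s" if w: "w \<in> S0" for w
    using m0[OF cl0[OF w s] Q0[OF s]] asL[OF L0[OF w] L0[OF s] L0[OF Q0[OF s]]] Qr[OF s] by simp
  have sfQ: "mR (mR (mL w s) (fR a)) (Q s) = mL w s" if w: "w \<in> S0" for w
    using asR[OF R0[OF cl0[OF w s]] fRR[OF x(2)] R0[OF Q0[OF s]]] fRQ[OF x(2)] x(3) sQ[OF w] s_def by simp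
  show ?thesis
  proof (rule RstarI)
    show "(x, a) \<in> T" using p .
    show "(eL x, P (bL x)) \<in> T" using E_T[OF p] .
  next
    fix p1 p2 assume p1: "p1 \<in> T" and p2: "p2 \<in> T"
    obtain y b where yb: "p1 = (y, b)" by (cases p1)
    obtain z c where zc: "p2 = (z, c)" by (cases p2)
    obtain w1 where w1: "w1 \<in> S0" "mL w1 (P s) = w1"
      "Tm (y, b) (x, a) = (mL (eL y) (mL w1 s), mR (mL w1 s) (fR a))"
      "Tm (y, b) (eL x, P s) = (mL (eL y) w1, w1)" using Rkey[OF p] p1 yb s_def by blast
    obtain w2 where w2: "w2 \<in> S0" "mL w2 (P s) = w2"
      "Tm (z, c) (x, a) = (mL (eL z) (mL w2 s), mR (mL w2 s) (fR a))"
      "Tm (z, c) (eL x, P s) = (mL (eL z) w2, w2)" using Rkey[OF p] p2 zc s_def by blast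
    have yL: "y \<in> L" and zL: "z \<in> L" using p1 p2 yb zc T_iff by auto
    have eyL: "eL y \<in> L" and ezL: "eL z \<in> L" using eLL yL zL by auto
    have "(mL (eL y) (mL w1 s) = mL (eL z) (mL w2 s) \<and> mR (mL w1 s) (fR a) = mR (mL w2 s) (fR a))
       \<longleftrightarrow> (mL (eL y) w1 = mL (eL z) w2 \<and> w1 = w2)"
    proof
      assume h: "mL (eL y) (mL w1 s) = mL (eL z) (mL w2 s) \<and> mR (mL w1 s) (fR a) = mR (mL w2 s) (fR a)"
      then have "mL w1 s = mL w2 s" using sfQ[OF w1(1)] sfQ[OF w2(1)] by metis
      then have "mL w1 (P s) = mL w2 (P s)" using Rstar_canc[OF Rs L0[OF w1(1)] L0[OF w2(1)]] by simp
      then have ww: "w1 = w2" using w1(2) w2(2) by simp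
      have "mL (mL (eL y) w1) s = mL (mL (eL z) w1) s"
        using h ww asL[OF eyL L0[OF w1(1)] L0[OF s]] asL[OF ezL L0[OF w1(1)] L0[OF s]] by simp
      then have "mL (mL (eL y) w1) (P s) = mL (mL (eL z) w1) (P s)"
        using Rstar_canc[OF Rs clL[OF eyL L0[OF w1(1)]] clL[OF ezL L0[OF w1(1)]]] by simp
      then have "mL (eL y) w1 = mL (eL z) w1"
        using asL[OF eyL L0[OF w1(1)] L0[OF ps]] asL[OF ezL L0[OF w1(1)] L0[OF ps]] w1(2) by simp
      then show "mL (eL y) w1 = mL (eL z) w2 \<and> w1 = w2" using ww by simp
    next
      assume h: "mL (eL y) w1 = mL (eL z) w2 \<and> w1 = w2"
      then have hh: "w2 = w1" "mL (eL y) w1 = mL (eL z) w1" by auto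
      then show "mL (eL y) (mL w1 s) = mL (eL z) (mL w2 s) \<and> mR (mL w1 s) (fR a) = mR (mL w2 s) (fR a)"
        using asL[OF eyL L0[OF w1(1)] L0[OF s], symmetric] asL[OF ezL L0[OF w1(1)] L0[OF s], symmetric] by simp
    qed
    then show "(Tm p1 (x, a) = Tm p2 (x, a)) = (Tm p1 (eL x, P (bL x)) = Tm p2 (eL x, P (bL x)))"
      using w1 w2 yb zc s_def by simp
  next
    fix p1 assume p1: "p1 \<in> T"
    obtain y b where yb: "p1 = (y, b)" by (cases p1)
    obtain w where w: "w \<in> S0" "mL w (P s) = w"
      "Tm (y, b) (x, a) = (mL (eL y) (mL w s), mR (mL w s) (fR a))"
      "Tm (y, b) (eL x, P s) = (mL (eL y) w, w)" using Rkey[OF p] p1 yb s_def by blast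
    have yL: "y \<in> L" using p1 yb T_iff by auto
    have eyL: "eL y \<in> L" using eLL yL by auto
    have "(mL (eL y) (mL w s) = x \<and> mR (mL w s) (fR a) = a) \<longleftrightarrow> (mL (eL y) w = eL x \<and> w = P s)"
    proof
      assume h: "mL (eL y) (mL w s) = x \<and> mR (mL w s) (fR a) = a"
      have "mL w s = s" using sfQ[OF w(1)] h aQs[OF x(2)] x(3) s_def by metis
      then have "mL w (P s) = P s" using Rstar_canc1[OF Rs L0[OF w(1)]] by simp
      then have ww: "w = P s" using w(2) by simp
      have "mL (eL y) s = mL (eL x) s" using h ww Pl[OF s] xe by simp
      then have "mL (eL y) (P s) = mL (eL x) (P s)" using Rstar_canc[OF Rs eyL eLL[OF x(1)]] by simp
      then show "mL (eL y) w = eL x \<and> w = P s" using ww eLP[OF x(1)] s_def by simp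
    next
      assume h: "mL (eL y) w = eL x \<and> w = P s"
      then have hh: "w = P s" "mL (eL y) w = eL x" by auto
      have "mL (eL y) (mL w s) = mL (mL (eL y) w) s" using asL[OF eyL L0[OF w(1)] L0[OF s], symmetric] .
      also have "\<dots> = x" using hh(2) xe by simp
      finally have 1: "mL (eL y) (mL w s) = x" .
      have "mR (mL w s) (fR a) = a" using hh(1) Pl[OF s] ae by simp
      then show "mL (eL y) (mL w s) = x \<and> mR (mL w s) (fR a) = a" using 1 by simp
    qed
    then show "(Tm p1 (x, a) = (x, a)) = (Tm p1 (eL x, P (bL x)) = (eL x, P (bL x)))"
      using w yb s_def by simp
  qed
qed

end

context CD begin

lemma Lkey: assumes p: "(x, a) \<in> T" and q: "(y, b) \<in> T"
  shows "\<exists>v. v \<in> S0 \<and> mL (Q (bL x)) v = v \<and>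
     Tm (x, a) (y, b) = (mL (eL x) (mL (bL x) v), mR (mL (bL x) v) (fR b)) \<and>
     Tm (Q (bL x), fR a) (y, b) = (v, mR v (fR b))"
proof -
  have x: "x \<in> L" "a \<in> R" "bL x = bR a" and y: "y \<in> L" "b \<in> R" "bL y = bR b" using p q T_iff by auto
  define s v where "s = bL x" "v = st (fR a) y"
  have s: "s \<in> S0" using bLS0[OF x(1)] s_v_def by simp
  have qs: "Q s \<in> S0" using Q0[OF s] .
  have PQs: "P (Q s) = Q s \<and> Q (Q s) = Q s" using PQ_idem[OF Qid[OF s]] .
  have v: "v \<in> S0" using stS0[OF fRR[OF x(2)] y(1)] s_v_def by simp
  have bfa: "bR (fR a) = Q s" and ffa: "fR (fR a) = fR a" using bR_fR[OF x(2)] x(3) s_v_def by auto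
  have Qv: "mL (Q s) v = v" using G1[OF fRR[OF x(2)] y(1)] bfa PQs s_v_def by simp
  have c1: "st (mR (st s (Q s)) (fR (fR a))) y = st s (mL (eL (Q s)) (st (fR a) y))"
    using C1[OF L0[OF qs] y(1) R0[OF s] fRR[OF x(2)]] bL0[OF qs] bfa by simp
  have l: "st (mR (st s (Q s)) (fR (fR a))) y = st a y"
    using C2a[OF R0[OF s] L0[OF qs] s] Qr[OF s] ffa aR[OF x(2)] x(3) s_v_def by simp
  have r: "st s (mL (eL (Q s)) (st (fR a) y)) = mL s v"
  proof -
    have "st s (mL (eL (Q s)) (st (fR a) y)) = st s v" using eL0[OF qs] PQs Qv s_v_def by simp
    also have "\<dots> = mL s v" using C2a[OF R0[OF s] L0[OF v] s] .
    finally show ?thesis .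
  qed
  have ay: "st a y = mL s v" using c1 l r by simp
  have t1: "Tm (x, a) (y, b) = (mL (eL x) (mL s v), mR (mL s v) (fR b))" using Tm_eq ay by simp
  have t2: "Tm (Q s, fR a) (y, b) = (v, mR v (fR b))" using Tm_eq eL0[OF qs] PQs Qv s_v_def by simp
  show ?thesis using v Qv t1 t2 s_v_def by blast
qed

lemma F_idem: assumes p: "(x, a) \<in> T" shows "Tm (Q (bL x), fR a) (Q (bL x), fR a) = (Q (bL x), fR a)"
proof -
  have x: "x \<in> L" "a \<in> R" "bL x = bR a" using p T_iff by auto
  have s: "bL x \<in> S0" using bLS0[OF x(1)] .
  have qs: "Q (bL x) \<in> S0" using Q0[OF s] .
  have "st (fR a) (Q (bL x)) = Q (bL x)" using C2b[OF fRR[OF x(2)] L0[OF qs] qs] fRQ[OF x(2)] x(3) by simp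
  then show ?thesis using Tm_eq eL0[OF qs] PQ_idem[OF Qid[OF s]] QQ[OF s] bR_fR[OF x(2)] QfR[OF x(2)] x(3)
    m0[OF qs qs] by simp
qed

lemma E_idem: assumes p: "(x, a) \<in> T" shows "Tm (eL x, P (bL x)) (eL x, P (bL x)) = (eL x, P (bL x))"
proof -
  have x: "x \<in> L" "a \<in> R" "bL x = bR a" using p T_iff by auto
  have s: "bL x \<in> S0" using bLS0[OF x(1)] .
  have ps: "P (bL x) \<in> S0" using P0[OF s] .
  have "st (P (bL x)) (eL x) = P (bL x)" using C2a[OF R0[OF ps] eLL[OF x(1)] ps] PeL[OF x(1)] by simp
  then show ?thesis using Tm_eq bL_eL[OF x(1)] eLP[OF x(1)] fR0[OF ps] PQ_idem[OF Pid[OF s]] PP[OF s]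
    m0[OF ps ps] by simp
qed

lemma T_L: assumes p: "(x, a) \<in> T" shows "Lstar T Tm (x, a) (Q (bL x), fR a)"
proof -
  have x: "x \<in> L" "a \<in> R" "bL x = bR a" using p T_iff by auto
  define s where "s = bL x"
  have s: "s \<in> S0" using bLS0[OF x(1)] s_def by simp
  have qs: "Q s \<in> S0" using Q0[OF s] .
  have LsL: "Lstar L mL s (Q s)" using AL.star_L[OF s] .
  have LsR: "Lstar R mR s (Q s)" using AR.star_L[OF s] saR by simp
  have ae: "a = mR s (fR a)" using aR[OF x(2)] x(3) s_def by simp
  have xe: "x = mL (eL x) s" using xL[OF x(1)] s_def by simp
  have Pfirst: "mL (P s) (mL (eL x) (mL s v)) = mL s v" if v: "v \<in> S0" for v
  proof -
    have "mL (P s) (mL (eL x) (mL s v)) = mL (mL (P s) (eL x)) (mL s v)"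
      using asL[OF L0[OF P0[OF s]] eLL[OF x(1)] L0[OF cl0[OF s v]], symmetric] .
    also have "\<dots> = mL (mL (P s) s) v" using PeL[OF x(1)] asL[OF L0[OF P0[OF s]] L0[OF s] L0[OF v]] s_def by simp
    also have "\<dots> = mL s v" using Pl[OF s] by simp
    finally show ?thesis .
  qed
  have sv: "mR (mL s v) f = mR s (mR v f)" if v: "v \<in> S0" and f: "f \<in> R" for v f
    using m0[OF s v] asR[OF R0[OF s] R0[OF v] f] by simp
  show ?thesis
  proof (rule LstarI)
    show "(x, a) \<in> T" using p .
    show "(Q (bL x), fR a) \<in> T" using F_T[OF p] .
  next
    fix p1 p2 assume p1: "p1 \<in> T" and p2: "p2 \<in> T"
    obtain y b where yb: "p1 = (y, b)" by (cases p1)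
    obtain z c where zc: "p2 = (z, c)" by (cases p2)
    obtain v1 where v1: "v1 \<in> S0" "mL (Q s) v1 = v1"
      "Tm (x, a) (y, b) = (mL (eL x) (mL s v1), mR (mL s v1) (fR b))"
      "Tm (Q s, fR a) (y, b) = (v1, mR v1 (fR b))" using Lkey[OF p] p1 yb s_def by blast
    obtain v2 where v2: "v2 \<in> S0" "mL (Q s) v2 = v2"
      "Tm (x, a) (z, c) = (mL (eL x) (mL s v2), mR (mL s v2) (fR c))"
      "Tm (Q s, fR a) (z, c) = (v2, mR v2 (fR c))" using Lkey[OF p] p2 zc s_def by blast
    have bR': "fR b \<in> R" and cR': "fR c \<in> R" using p1 p2 yb zc T_iff fRR by auto
    have "(mL (eL x) (mL s v1) = mL (eL x) (mL s v2) \<and> mR (mL s v1) (fR b) = mR (mL s v2) (fR c))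
       \<longleftrightarrow> (v1 = v2 \<and> mR v1 (fR b) = mR v2 (fR c))"
    proof
      assume h: "mL (eL x) (mL s v1) = mL (eL x) (mL s v2) \<and> mR (mL s v1) (fR b) = mR (mL s v2) (fR c)"
      then have "mL s v1 = mL s v2" using Pfirst[OF v1(1)] Pfirst[OF v2(1)] by metis
      then have "mL (Q s) v1 = mL (Q s) v2" using Lstar_canc[OF LsL L0[OF v1(1)] L0[OF v2(1)]] by simp
      then have vv: "v1 = v2" using v1(2) v2(2) by simp
      have "mR s (mR v1 (fR b)) = mR s (mR v1 (fR c))" using h vv sv[OF v1(1) bR'] sv[OF v1(1) cR'] by simp
      then have "mR (Q s) (mR v1 (fR b)) = mR (Q s) (mR v1 (fR c))"
        using Lstar_canc[OF LsR clR[OF R0[OF v1(1)] bR'] clR[OF R0[OF v1(1)] cR']] by simp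
      moreover have "mR (Q s) (mR v1 f) = mR v1 f" if f: "f \<in> R" for f
        using asR[OF R0[OF qs] R0[OF v1(1)] f, symmetric] m0[OF qs v1(1)] v1(2) by simp
      ultimately have "mR v1 (fR b) = mR v1 (fR c)" using bR' cR' by simp
      then show "v1 = v2 \<and> mR v1 (fR b) = mR v2 (fR c)" using vv by simp
    next
      assume h: "v1 = v2 \<and> mR v1 (fR b) = mR v2 (fR c)"
      then have hh: "v2 = v1" "mR v1 (fR b) = mR v1 (fR c)" by auto
      then show "mL (eL x) (mL s v1) = mL (eL x) (mL s v2) \<and> mR (mL s v1) (fR b) = mR (mL s v2) (fR c)"
        using sv[OF v1(1) bR'] sv[OF v1(1) cR'] by simp
    qed
    then show "(Tm (x, a) p1 = Tm (x, a) p2) = (Tm (Q (bL x), fR a) p1 = Tm (Q (bL x), fR a) p2)"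
      using v1 v2 yb zc s_def by simp
  next
    fix p1 assume p1: "p1 \<in> T"
    obtain y b where yb: "p1 = (y, b)" by (cases p1)
    obtain v where v: "v \<in> S0" "mL (Q s) v = v"
      "Tm (x, a) (y, b) = (mL (eL x) (mL s v), mR (mL s v) (fR b))"
      "Tm (Q s, fR a) (y, b) = (v, mR v (fR b))" using Lkey[OF p] p1 yb s_def by blast
    have bR': "fR b \<in> R" using p1 yb T_iff fRR by auto
    have "(mL (eL x) (mL s v) = x \<and> mR (mL s v) (fR b) = a) \<longleftrightarrow> (v = Q s \<and> mR v (fR b) = fR a)"
    proof
      assume h: "mL (eL x) (mL s v) = x \<and> mR (mL s v) (fR b) = a"
      have "mL s v = s" using Pfirst[OF v(1)] h PsX[OF x(1)] s_def by metis
      then have "mL (Q s) v = Q s" using Lstar_canc1[OF LsL L0[OF v(1)]] by simp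
      then have vv: "v = Q s" using v(2) by simp
      have "mR s (fR b) = mR s (fR a)" using h vv Qr[OF s] ae by simp
      then have "mR (Q s) (fR b) = mR (Q s) (fR a)" using Lstar_canc[OF LsR bR' fRR[OF x(2)]] by simp
      then show "v = Q s \<and> mR v (fR b) = fR a" using vv QfR[OF x(2)] x(3) s_def by simp
    next
      assume h: "v = Q s \<and> mR v (fR b) = fR a"
      then have hh: "v = Q s" "mR (Q s) (fR b) = fR a" by auto
      have 1: "mL (eL x) (mL s v) = x" using hh(1) Qr[OF s] xe by simp
      have "mR (mL s v) (fR b) = mR s (mR (Q s) (fR b))" using sv[OF v(1) bR'] hh(1) by simp
      also have "\<dots> = a" using hh(2) ae by simp
      finally show "mL (eL x) (mL s v) = x \<and> mR (mL s v) (fR b) = a" using 1 by simp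
    qed
    then show "(Tm (x, a) p1 = (x, a)) = (Tm (Q (bL x), fR a) p1 = (Q (bL x), fR a))"
      using v yb s_def by simp
  qed
qed

lemma T_abundant: "abundant T Tm"
proof -
  have R: "\<exists>e\<in>idems T Tm. Rstar T Tm p e" if p: "p \<in> T" for p
  proof -
    obtain x a where xa: "p = (x, a)" by (cases p)
    have "(eL x, P (bL x)) \<in> idems T Tm" using E_T E_idem p xa unfolding idems_def by simp
    then show ?thesis using T_R p xa by blast
  qed
  have L: "\<exists>e\<in>idems T Tm. Lstar T Tm p e" if p: "p \<in> T" for p
  proof -
    obtain x a where xa: "p = (x, a)" by (cases p)
    have "(Q (bL x), fR a) \<in> idems T Tm" using F_T F_idem p xa unfolding idems_def by simp
    then show ?thesis using T_L p xa by blast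
  qed
  show ?thesis unfolding abundant_def using T_sg R L by blast
qed

end

context CD begin

abbreviation "T0 \<equiv> T0_set S0"

lemma T0_iff: "(u, v) \<in> T0 \<longleftrightarrow> u \<in> S0 \<and> v = u" unfolding T0_set_def by auto
lemma T0_E: "p \<in> T0 \<Longrightarrow> \<exists>s. s \<in> S0 \<and> p = (s, s)" unfolding T0_set_def by auto

lemma T0_T: "T0 \<subseteq> T"
proof
  fix p assume "p \<in> T0"
  then obtain s where s: "s \<in> S0" "p = (s, s)" using T0_E by blast
  then show "p \<in> T" using T_iff L0 R0 bL0 bR0 by simp
qed

lemma Tm0: assumes s: "s \<in> S0" and t: "t \<in> S0" shows "Tm (s, s) (t, t) = (mL s t, mL s t)"
proof -
  have st: "st s t = mL s t" using C2a[OF R0[OF s] L0[OF t] s] .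
  have 1: "mL (eL s) (st s t) = mL s t"
    using st eL0[OF s] asL[OF L0[OF P0[OF s]] L0[OF s] L0[OF t], symmetric] Pl[OF s] by simp
  have 2: "mR (st s t) (fR t) = mL s t"
    using st fR0[OF t] m0[OF cl0[OF s t] Q0[OF t]] asL[OF L0[OF s] L0[OF t] L0[OF Q0[OF t]]] Qr[OF t] by simp
  show ?thesis using Tm_eq 1 2 by simp
qed

lemma T0_R: "t \<in> S0 \<Longrightarrow> Rstar T Tm (t, t) (P t, P t)"
  using T_R[of t t] T_iff L0 R0 bL0 bR0 eL0 by simp
lemma T0_L: "t \<in> S0 \<Longrightarrow> Lstar T Tm (t, t) (Q t, Q t)"
  using T_L[of t t] T_iff L0 R0 bL0 bR0 fR0 by simp

lemma idems_T0: "(u, v) \<in> idems T0 Tm \<longleftrightarrow> u \<in> idems S0 mL \<and> v = u"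
  unfolding idems_def using T0_iff Tm0 by auto

lemma idems_T0': "p \<in> idems T0 Tm \<Longrightarrow> \<exists>e. e \<in> idems S0 mL \<and> p = (e, e)"
  using idems_T0 by (cases p) blast

lemma T0_comm: "\<forall>e\<in>idems T0 Tm. \<forall>f\<in>idems T0 Tm. Tm e f = Tm f e"
proof (intro ballI)
  fix e f assume e: "e \<in> idems T0 Tm" and f: "f \<in> idems T0 Tm"
  obtain u where u: "u \<in> idems S0 mL" "e = (u, u)" using idems_T0'[OF e] by blast
  obtain v where v: "v \<in> idems S0 mL" "f = (v, v)" using idems_T0'[OF f] by blast
  show "Tm e f = Tm f e" using Tm0 AL.comm0[OF u(1) v(1)] u v AL.idems0D by simp
qed

lemma T0_sg: "semigroup_on T0 Tm"
  unfolding semigroup_on_def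
proof (intro conjI ballI)
  fix p q assume p: "p \<in> T0" and q: "q \<in> T0"
  obtain s where s: "s \<in> S0" "p = (s, s)" using T0_E[OF p] by blast
  obtain t where t: "t \<in> S0" "q = (t, t)" using T0_E[OF q] by blast
  show "Tm p q \<in> T0" using Tm0[OF s(1) t(1)] cl0[OF s(1) t(1)] T0_iff s t by simp
next
  fix p q r assume "p \<in> T0" "q \<in> T0" "r \<in> T0"
  then show "Tm (Tm p q) r = Tm p (Tm q r)" using T0_T T_sg unfolding semigroup_on_def by blast
qed

lemma T0_R0: "t \<in> S0 \<Longrightarrow> Rstar T0 Tm (t, t) (P t, P t)"
  using Rstar_restrict[OF T0_R T0_T] T0_iff P0 by simp
lemma T0_L0: "t \<in> S0 \<Longrightarrow> Lstar T0 Tm (t, t) (Q t, Q t)"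
  using Lstar_restrict[OF T0_L T0_T] T0_iff Q0 by simp

lemma Pt_idem: "t \<in> S0 \<Longrightarrow> (P t, P t) \<in> idems T0 Tm" using idems_T0 Pid by simp
lemma Qt_idem: "t \<in> S0 \<Longrightarrow> (Q t, Q t) \<in> idems T0 Tm" using idems_T0 Qid by simp

lemma T0_adequate: "adequate T0 Tm"
proof -
  have R: "\<exists>e\<in>idems T0 Tm. Rstar T0 Tm a e" if a: "a \<in> T0" for a
  proof -
    obtain t where t: "t \<in> S0" "a = (t, t)" using T0_E[OF a] by blast
    show ?thesis using T0_R0[OF t(1)] Pt_idem[OF t(1)] t(2) by blast
  qed
  have L: "\<exists>e\<in>idems T0 Tm. Lstar T0 Tm a e" if a: "a \<in> T0" for a
  proof -
    obtain t where t: "t \<in> S0" "a = (t, t)" using T0_E[OF a] by blast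
    show ?thesis using T0_L0[OF t(1)] Qt_idem[OF t(1)] t(2) by blast
  qed
  show ?thesis unfolding adequate_def abundant_def using T0_sg T0_comm R L by blast
qed

lemma aplusT0: "t \<in> S0 \<Longrightarrow> aplus T0 Tm (t, t) = (P t, P t)"
  using aplus_eq[OF T0_comm Pt_idem T0_R0] by simp
lemma astarT0: "t \<in> S0 \<Longrightarrow> astar T0 Tm (t, t) = (Q t, Q t)"
  using astar_eq[OF T0_comm Qt_idem T0_L0] by simp

lemma T0_ass: "adequate_star_subsemigroup T Tm T0"
proof -
  have R: "\<exists>e\<in>idems T0 Tm. Rstar T Tm a e" if a: "a \<in> T0" for a
  proof -
    obtain t where t: "t \<in> S0" "a = (t, t)" using T0_E[OF a] by blast
    show ?thesis using T0_R[OF t(1)] Pt_idem[OF t(1)] t(2) by blast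
  qed
  have L: "\<exists>e\<in>idems T0 Tm. Lstar T Tm a e" if a: "a \<in> T0" for a
  proof -
    obtain t where t: "t \<in> S0" "a = (t, t)" using T0_E[OF a] by blast
    show ?thesis using T0_L[OF t(1)] Qt_idem[OF t(1)] t(2) by blast
  qed
  show ?thesis unfolding adequate_star_subsemigroup_def using T0_T T0_adequate R L by blast
qed

lemma GL_T: assumes "a \<in> T" "b \<in> T" "Tm a b = a" "Tm b a = b" shows "GreenL T Tm a b"
  unfolding GreenL_def using assms by (intro conjI disjI2 bexI[of _ a] bexI[of _ b]) auto
lemma GR_T: assumes "a \<in> T" "b \<in> T" "Tm b a = a" "Tm a b = b" shows "GreenR T Tm a b"
  unfolding GreenR_def using assms by (intro conjI disjI2 bexI[of _ a] bexI[of _ b]) auto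

lemma T_fac_ex: assumes p: "(x, a) \<in> T"
  shows "transversal_factorisation T Tm T0 (x, a) (bL x, bL x) (eL x, P (bL x)) (Q (bL x), fR a)"
proof -
  have x: "x \<in> L" "a \<in> R" "bL x = bR a" using p T_iff by auto
  define s where "s = bL x"
  have s: "s \<in> S0" using bLS0[OF x(1)] s_def by simp
  have ps: "P s \<in> S0" and qs: "Q s \<in> S0" using P0[OF s] Q0[OF s] by auto
  have E: "(eL x, P s) \<in> T" and F: "(Q s, fR a) \<in> T" using E_T[OF p] F_T[OF p] s_def by auto
  have Ei: "(eL x, P s) \<in> idems T Tm" using E E_idem[OF p] s_def unfolding idems_def by simp
  have Fi: "(Q s, fR a) \<in> idems T Tm" using F F_idem[OF p] s_def unfolding idems_def by simp
  have Pss: "(P s, P s) \<in> T" and Qss: "(Q s, Q s) \<in> T" using T0_T T0_iff ps qs by auto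
  have m1: "Tm (eL x, P s) (s, s) = (x, s)"
  proof -
    have "st (P s) s = s" using C2a[OF R0[OF ps] L0[OF s] ps] Pl[OF s] by simp
    then show ?thesis using Tm_eq bL_eL[OF x(1)] xL[OF x(1)] fR0[OF s] Qr[OF s] m0[OF s Q0[OF s]] s_def by simp
  qed
  have m2: "Tm (x, s) (Q s, fR a) = (x, a)"
  proof -
    have "st s (Q s) = s" using C2a[OF R0[OF s] L0[OF qs] s] Qr[OF s] by simp
    then show ?thesis using Tm_eq bR_fR[OF x(2)] xL[OF x(1)] aR[OF x(2)] x(3) s_def by simp
  qed
  have g1: "Tm (eL x, P s) (P s, P s) = (eL x, P s)"
  proof -
    have "st (P s) (P s) = P s" using C2a[OF R0[OF ps] L0[OF ps] ps] PP[OF s] by simp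
    then show ?thesis using Tm_eq bL_eL[OF x(1)] eLP[OF x(1)] fR0[OF ps] PQ_idem[OF Pid[OF s]] PP[OF s] m0[OF ps ps] s_def by simp
  qed
  have g2: "Tm (P s, P s) (eL x, P s) = (P s, P s)"
  proof -
    have "st (P s) (eL x) = P s" using C2a[OF R0[OF ps] eLL[OF x(1)] ps] PeL[OF x(1)] s_def by simp
    then show ?thesis using Tm_eq eL0[OF ps] PQ_idem[OF Pid[OF s]] PP[OF s] fR0[OF ps] m0[OF ps ps] by simp
  qed
  have g3: "Tm (Q s, Q s) (Q s, fR a) = (Q s, fR a)"
  proof -
    have "st (Q s) (Q s) = Q s" using C2a[OF R0[OF qs] L0[OF qs] qs] QQ[OF s] by simp
    then show ?thesis using Tm_eq eL0[OF qs] PQ_idem[OF Qid[OF s]] QQ[OF s] bR_fR[OF x(2)] QfR[OF x(2)] x(3) s_def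
      by simp
  qed
  have g4: "Tm (Q s, fR a) (Q s, Q s) = (Q s, Q s)"
  proof -
    have "st (fR a) (Q s) = Q s" using C2b[OF fRR[OF x(2)] L0[OF qs] qs] fRQ[OF x(2)] x(3) s_def by simp
    then show ?thesis using Tm_eq eL0[OF qs] PQ_idem[OF Qid[OF s]] QQ[OF s] fR0[OF qs] m0[OF qs qs] by simp
  qed
  show ?thesis unfolding transversal_factorisation_def
    using T0_iff s Ei Fi m1 m2 aplusT0[OF s] astarT0[OF s] GL_T[OF E Pss g1 g2] GR_T[OF F Qss g3 g4] s_def
    by simp
qed

lemma Tm_comp: "Tm (x, a) (y, b) = (u, v) \<Longrightarrow> mL (eL x) (st a y) = u \<and> mR (st a y) (fR b) = v"
  by (simp add: Tm_eq)

lemma T_fac_unique: assumes p: "p \<in> T" and t: "transversal_factorisation T Tm T0 p xb e f"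
  shows "xb = (bL (fst p), bL (fst p))"
proof -
  have tt: "xb \<in> T0" "e \<in> idems T Tm" "f \<in> idems T Tm" "p = Tm (Tm e xb) f"
    "GreenL T Tm e (aplus T0 Tm xb)" "GreenR T Tm f (astar T0 Tm xb)"
    using t unfolding transversal_factorisation_def by auto
  obtain tv where tv: "tv \<in> S0" "xb = (tv, tv)" using T0_E[OF tt(1)] by blast
  define pt qt where "pt = P tv" "qt = Q tv"
  have pt: "pt \<in> S0" "pt \<in> idems S0 mL" and qt: "qt \<in> S0" "qt \<in> idems S0 mL"
    using P0 Q0 Pid Qid tv pt_qt_def by auto
  have ptT: "(pt, pt) \<in> idems T Tm" using Pt_idem[OF tv(1)] T0_T pt_qt_def unfolding idems_def by auto
  have qtT: "(qt, qt) \<in> idems T Tm" using Qt_idem[OF tv(1)] T0_T pt_qt_def unfolding idems_def by auto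
  have eGL: "Tm e (pt, pt) = e \<and> Tm (pt, pt) e = (pt, pt)"
    using GreenL_idem[OF T_sg tt(2) ptT] tt(5) aplusT0[OF tv(1)] tv pt_qt_def by simp
  have fGR: "Tm (qt, qt) f = f \<and> Tm f (qt, qt) = (qt, qt)"
    using GreenR_idem[OF T_sg tt(3) qtT] tt(6) astarT0[OF tv(1)] tv pt_qt_def by simp
  obtain y b where yb: "e = (y, b)" by (cases e)
  obtain z c where zc: "f = (z, c)" by (cases f)
  have eT: "(y, b) \<in> T" using tt(2) yb unfolding idems_def by simp
  have fT: "(z, c) \<in> T" using tt(3) zc unfolding idems_def by simp
  have y: "y \<in> L" "b \<in> R" "bL y = bR b" and z: "z \<in> L" "c \<in> R" "bL z = bR c" using eT fT T_iff by auto
  have ptP: "P pt = pt \<and> Q pt = pt" and qtP: "P qt = qt \<and> Q qt = qt" using PQ_idem pt qt by auto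
  have b0: "b \<in> S0" and bpt: "mL b pt = b"
  proof -
    have sb: "st b pt = mR b pt" using C2b[OF y(2) L0[OF pt(1)] pt(1)] .
    have w: "mR b pt \<in> S0" using stS0[OF y(2) L0[OF pt(1)]] sb by simp
    have "b = mR (st b pt) (fR pt)" using Tm_comp[of y b pt pt y b] eGL yb by simp
    then have b1: "b = mR (mR b pt) pt" using sb fR0[OF pt(1)] ptP by simp
    then show "b \<in> S0" using cl0[OF w pt(1)] m0[OF w pt(1)] by simp
    have "mR (mR b pt) pt = mR b pt" using asR[OF y(2) R0[OF pt(1)] R0[OF pt(1)]] m0[OF pt(1) pt(1)] AL.idems0D2[OF pt(2)] by simp
    then show "mL b pt = b" using b1 m0[OF \<open>b \<in> S0\<close> pt(1)] by simp
  qed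
  have ptQb: "mL pt (Q b) = pt"
  proof -
    have sy: "st pt y = mL pt y" using C2a[OF R0[OF pt(1)] y(1) pt(1)] .
    have w: "mL pt y \<in> S0" using stS0[OF R0[OF pt(1)] y(1)] sy by simp
    have "pt = mR (st pt y) (fR b)" using Tm_comp[of pt pt y b pt pt] eGL yb by simp
    then have h: "pt = mL (mL pt y) (Q b)" using sy fR0[OF b0] m0[OF w Q0[OF b0]] by simp
    have "mL pt (Q b) = mL (mL (mL pt y) (Q b)) (Q b)" using h by simp
    also have "\<dots> = mL (mL pt y) (Q b)" using asL[OF L0[OF w] L0[OF Q0[OF b0]] L0[OF Q0[OF b0]]] QQ[OF b0] by simp
    finally show ?thesis using h by simp
  qed
  have Qbpt: "Q b = pt"
  proof -
    have "mL (Q b) pt = Q b" using Lstar_canc1[OF AL.star_L[OF b0] L0[OF pt(1)] bpt] .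
    then show ?thesis using AL.comm0[OF Qid[OF b0] pt(2)] ptQb by simp
  qed
  have yid: "y \<in> idems L mL"
  proof -
    have bb: "bR b = b" using bR0[OF b0] .
    have sby: "st b y = mL b y" using C2a[OF y(2) y(1) b0] .
    have "Tm (y, b) (y, b) = (y, b)" using tt(2) yb unfolding idems_def by simp
    then have "y = mL (eL y) (st b y)" using Tm_comp[of y b y b y b] by simp
    then have h: "y = mL (eL y) (mL b y)" using sby by simp
    have ye: "y = mL (eL y) b" using xL[OF y(1)] y(3) bb by simp
    have "mL y y = mL (mL (eL y) b) y" using ye by simp
    also have "\<dots> = mL (eL y) (mL b y)" using asL[OF eLL[OF y(1)] L0[OF b0] y(1)] .
    finally show ?thesis using h y(1) unfolding idems_def by simp
  qed
  have eLy: "eL y = y" using AL.la_idem[OF yid] .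
  have bLy: "bL y = pt"
  proof -
    have "bL y = P (bL y)" using AL.la_idem_bar[OF yid] .
    then have "b = P b" using y(3) bR0[OF b0] by simp
    then have "b \<in> idems S0 mL" using Pid[OF b0] by simp
    then have "Q b = b" using PQ_idem by blast
    then show ?thesis using Qbpt y(3) bR0[OF b0] by simp
  qed
  have z0: "z \<in> S0" and qtz: "mL qt z = z"
  proof -
    have sz: "st qt z = mL qt z" using C2a[OF R0[OF qt(1)] z(1) qt(1)] .
    have w: "mL qt z \<in> S0" using stS0[OF R0[OF qt(1)] z(1)] sz by simp
    have "z = mL (eL qt) (st qt z)" using Tm_comp[of qt qt z c z c] fGR zc by simp
    then have z1: "z = mL qt (mL qt z)" using sz eL0[OF qt(1)] qtP by simp
    then show "z \<in> S0" using cl0[OF qt(1) w] by simp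
    have "mL qt (mL qt z) = mL qt z" using asL[OF L0[OF qt(1)] L0[OF qt(1)] z(1), symmetric] AL.idems0D2[OF qt(2)] by simp
    then show "mL qt z = z" using z1 by simp
  qed
  have Pzqt: "mL (P z) qt = qt"
  proof -
    have sc: "st c qt = mR c qt" using C2b[OF z(2) L0[OF qt(1)] qt(1)] .
    have w: "mR c qt \<in> S0" using stS0[OF z(2) L0[OF qt(1)]] sc by simp
    have "qt = mL (eL z) (st c qt)" using Tm_comp[of z c qt qt qt qt] fGR zc by simp
    then have h: "qt = mL (P z) (mR c qt)" using sc eL0[OF z0] by simp
    have "mL (P z) qt = mL (P z) (mL (P z) (mR c qt))" using h by simp
    also have "\<dots> = mL (P z) (mR c qt)" using asL[OF L0[OF P0[OF z0]] L0[OF P0[OF z0]] L0[OF w], symmetric] PP[OF z0] by simp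
    finally show ?thesis using h by simp
  qed
  have Pzq: "P z = qt"
  proof -
    have "mL qt (P z) = P z" using Rstar_canc1[OF AL.plus_R[OF z0] L0[OF qt(1)] qtz] .
    then show ?thesis using AL.comm0[OF Pid[OF z0] qt(2)] Pzqt by simp
  qed
  have cid: "c \<in> idems R mR"
  proof -
    have bc: "bR c = z" using z(3) bL0[OF z0] by simp
    have scz: "st c z = mR c z" using C2b[OF z(2) z(1) z0] .
    have "Tm (z, c) (z, c) = (z, c)" using tt(3) zc unfolding idems_def by simp
    then have "c = mR (st c z) (fR c)" using Tm_comp[of z c z c z c] by simp
    then have h: "c = mR (mR c z) (fR c)" using scz by simp
    have ce: "c = mR z (fR c)" using aR[OF z(2)] bc by simp
    have "mR c c = mR c (mR z (fR c))" using ce by simp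
    also have "\<dots> = mR (mR c z) (fR c)" using asR[OF z(2) R0[OF z0] fRR[OF z(2)], symmetric] .
    finally show ?thesis using h z(2) unfolding idems_def by simp
  qed
  have bRc: "bR c = qt"
  proof -
    have "bR c = astar S0 mR (bR c)" using AR.ra_idem_bar[OF cid] .
    then have "z = Q z" using z(3) bL0[OF z0] saR by simp
    then have "z \<in> idems S0 mL" using Qid[OF z0] by simp
    then have "P z = z" using PQ_idem by blast
    then show ?thesis using Pzq z(3) bL0[OF z0] by simp
  qed
  have z_eq: "z = qt" using bRc z(3) bL0[OF z0] by simp
  have b_eq: "b = pt" using bLy y(3) bR0[OF b0] by simp
  have m1: "Tm (y, b) (tv, tv) = (mL y tv, tv)"
  proof -
    have "st pt tv = tv" using C2a[OF R0[OF pt(1)] L0[OF tv(1)] pt(1)] Pl[OF tv(1)] pt_qt_def by simp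
    then show ?thesis using Tm_eq b_eq eLy fR0[OF tv(1)] Qr[OF tv(1)] m0[OF tv(1) Q0[OF tv(1)]] by simp
  qed
  have pw: "mL (P (bL y)) tv = tv" using bLy ptP Pl[OF tv(1)] pt_qt_def by simp
  have pl: "bL (mL y tv) = tv \<and> eL (mL y tv) = mL y (P tv)" using prodL[OF y(1) tv(1) pw] eLy by simp
  have yP: "mL y (P tv) = y" using eLP[OF y(1)] eLy bLy ptP pt_qt_def by simp
  have m2: "Tm (mL y tv, tv) (z, c) = (mL y tv, mR tv c)"
  proof -
    have "st tv z = tv" using C2a[OF R0[OF tv(1)] z(1) tv(1)] z_eq Qr[OF tv(1)] pt_qt_def by simp
    then show ?thesis using Tm_eq pl yP xL[OF y(1)] AR.ra_idem[OF cid] by simp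
  qed
  have "fst p = mL y tv" using tt(4) yb zc tv(2) m1 m2 by simp
  then show ?thesis using pl tv(2) by simp
qed

lemma T_qi: "quasi_ideal T Tm T0"
  unfolding quasi_ideal_def
proof (intro ballI)
  fix p q r assume p: "p \<in> T0" and q: "q \<in> T" and r: "r \<in> T0"
  obtain s where s: "s \<in> S0" "p = (s, s)" using T0_E[OF p] by blast
  obtain t where t: "t \<in> S0" "r = (t, t)" using T0_E[OF r] by blast
  obtain x a where xa: "q = (x, a)" by (cases q)
  have x: "x \<in> L" "a \<in> R" "bL x = bR a" using q xa T_iff by auto
  define u where "u = mL s x"
  have sx: "st s x = u" using C2a[OF R0[OF s(1)] x(1) s(1)] u_def by simp
  have u: "u \<in> S0" using stS0[OF R0[OF s(1)] x(1)] sx by simp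
  have m1: "Tm (s, s) (x, a) = (u, mR u (fR a))"
    using Tm_eq sx eL0[OF s(1)] asL[OF L0[OF P0[OF s(1)]] L0[OF s(1)] x(1), symmetric] Pl[OF s(1)] u_def by simp
  have uf: "mR u (fR a) \<in> R" using clR[OF R0[OF u] fRR[OF x(2)]] .
  define w where "w = st (mR u (fR a)) t"
  have w: "w \<in> S0" using stS0[OF uf L0[OF t(1)]] w_def by simp
  have ww: "w = mR (mR u (fR a)) t" using C2b[OF uf L0[OF t(1)] t(1)] w_def by simp
  have Pw: "mL (P u) w = w"
  proof -
    have "mL (P u) w = mR (P u) w" using m0[OF P0[OF u] w] by simp
    also have "\<dots> = mR (P u) (mR (mR u (fR a)) t)" using ww by simp
    also have "\<dots> = mR (mR (mR (P u) u) (fR a)) t"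
      using asR[OF R0[OF P0[OF u]] uf R0[OF t(1)], symmetric] asR[OF R0[OF P0[OF u]] R0[OF u] fRR[OF x(2)], symmetric] by simp
    also have "\<dots> = w" using m0[OF P0[OF u] u] Pl[OF u] ww by simp
    finally show ?thesis .
  qed
  have wQ: "mR w (Q t) = w" using G2[OF uf L0[OF t(1)]] bL0[OF t(1)] w_def by simp
  have "Tm (u, mR u (fR a)) (t, t) = (w, w)" using Tm_eq eL0[OF u] Pw fR0[OF t(1)] wQ w_def by simp
  then show "Tm (Tm p q) r \<in> T0" using m1 s t xa T0_iff w by simp
qed

lemma T_qiat: "qi_adequate_transversal T Tm T0"
proof -
  have U: "\<exists>!xb. \<exists>e f. transversal_factorisation T Tm T0 p xb e f" if p: "p \<in> T" for p
  proof (rule ex1I[of _ "(bL (fst p), bL (fst p))"])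
    obtain x a where xa: "p = (x, a)" by (cases p)
    have "transversal_factorisation T Tm T0 (x, a) (bL x, bL x) (eL x, P (bL x)) (Q (bL x), fR a)"
      using T_fac_ex p xa by simp
    then show "\<exists>e f. transversal_factorisation T Tm T0 p (bL (fst p), bL (fst p)) e f"
      using xa by auto
    fix xb assume "\<exists>e f. transversal_factorisation T Tm T0 p xb e f"
    then show "xb = (bL (fst p), bL (fst p))" using T_fac_unique[OF p] by blast
  qed
  show ?thesis unfolding qi_adequate_transversal_def adequate_transversal_def
    using T_abundant T0_ass U T_qi by blast
qed

lemma T0_iso: "sg_iso T0 Tm S0 mL fst"
proof -
  have "bij_betw fst T0 S0"
  proof (rule bij_betwI')
    fix p q assume p: "p \<in> T0" and q: "q \<in> T0"
    obtain s where s: "p = (s, s)" using T0_E[OF p] by blast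
    obtain t where t: "q = (t, t)" using T0_E[OF q] by blast
    show "(fst p = fst q) = (p = q)" using s t by simp
  next
    fix p assume p: "p \<in> T0"
    obtain s where s: "s \<in> S0" "p = (s, s)" using T0_E[OF p] by blast
    then show "fst p \<in> S0" by simp
  next
    fix s assume s: "s \<in> S0"
    then have "(s, s) \<in> T0" using T0_iff by simp
    then show "\<exists>p\<in>T0. s = fst p" by force
  qed
  moreover have "\<forall>a\<in>T0. \<forall>b\<in>T0. fst (Tm a b) = mL (fst a) (fst b)"
  proof (intro ballI)
    fix p q assume p: "p \<in> T0" and q: "q \<in> T0"
    obtain s where s: "s \<in> S0" "p = (s, s)" using T0_E[OF p] by blast
    obtain t where t: "t \<in> S0" "q = (t, t)" using T0_E[OF q] by blast
    show "fst (Tm p q) = mL (fst p) (fst q)" using Tm0[OF s(1) t(1)] s t by simp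
  qed
  ultimately show ?thesis unfolding sg_iso_def by blast
qed

end

theorem theorem2p8:
  shows "(\<forall>(L :: 'a set) mL R mR S0 st. construction_data L mL R mR S0 st \<longrightarrow>
            abundant (T_set L mL R mR S0) (T_mult L mL R mR S0 st) \<and>
            qi_adequate_transversal (T_set L mL R mR S0) (T_mult L mL R mR S0 st) (T0_set S0) \<and>
            (\<exists>\<phi>. sg_iso (T0_set S0) (T_mult L mL R mR S0 st) S0 mL \<phi>))
       \<and>
         (\<forall>(S :: 'b set) m S0. qi_adequate_transversal S m S0 \<longrightarrow>
            (\<exists>L mL R mR st. construction_data L mL R mR S0 st \<and>
               (\<forall>s\<in>S0. \<forall>t\<in>S0. mL s t = m s t) \<and>
               (\<exists>\<phi>. sg_iso (T_set L mL R mR S0) (T_mult L mL R mR S0 st) S m \<phi> \<and>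
                     \<phi> ` T0_set S0 = S0)))"
proof (rule conjI)
  show "\<forall>(L :: 'a set) mL R mR S0 st. construction_data L mL R mR S0 st \<longrightarrow>
            abundant (T_set L mL R mR S0) (T_mult L mL R mR S0 st) \<and>
            qi_adequate_transversal (T_set L mL R mR S0) (T_mult L mL R mR S0 st) (T0_set S0) \<and>
            (\<exists>\<phi>. sg_iso (T0_set S0) (T_mult L mL R mR S0 st) S0 mL \<phi>)"
  proof (intro allI impI)
    fix L :: "'a set" and mL R mR S0 st
    assume h: "construction_data L mL R mR S0 st"
    interpret C: CD L mL R mR S0 st by (rule CD.intro[OF h])
    show "abundant (T_set L mL R mR S0) (T_mult L mL R mR S0 st) \<and>
            qi_adequate_transversal (T_set L mL R mR S0) (T_mult L mL R mR S0 st) (T0_set S0) \<and>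
            (\<exists>\<phi>. sg_iso (T0_set S0) (T_mult L mL R mR S0 st) S0 mL \<phi>)"
      using C.T_abundant C.T_qiat C.T0_iso by blast
  qed
next
  show "\<forall>(S :: 'b set) m S0. qi_adequate_transversal S m S0 \<longrightarrow>
            (\<exists>L mL R mR st. construction_data L mL R mR S0 st \<and>
               (\<forall>s\<in>S0. \<forall>t\<in>S0. mL s t = m s t) \<and>
               (\<exists>\<phi>. sg_iso (T_set L mL R mR S0) (T_mult L mL R mR S0 st) S m \<phi> \<and>
                     \<phi> ` T0_set S0 = S0))"
  proof (intro allI impI)
    fix S :: "'b set" and m S0
    assume h: "qi_adequate_transversal S m S0"
    have a: "adequate_transversal S m S0" and q: "quasi_ideal S m S0"
      using h unfolding qi_adequate_transversal_def by auto
    interpret A: AT S m S0 by (rule AT.intro[OF a])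
    interpret Q: QAT S m S0 by (rule QAT.intro[OF A.AT_axioms QAT_axioms.intro[OF q]])
    show "\<exists>L mL R mR st. construction_data L mL R mR S0 st \<and>
               (\<forall>s\<in>S0. \<forall>t\<in>S0. mL s t = m s t) \<and>
               (\<exists>\<phi>. sg_iso (T_set L mL R mR S0) (T_mult L mL R mR S0 st) S m \<phi> \<and>
                     \<phi> ` T0_set S0 = S0)"
      using Q.converse .
  qed
qed

end
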